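(* The objects $\widetilde{U}_\Delta$ and $U_\Delta$, equipped with their involutions, are injectively fibrant objects of $\mathbf{Gpd}^{\mathbf{G}}$.
   Context: $\mathbf{Gpd}^{\mathbf{G}}$ is the category of groupoids equipped with an involution and involution-preserving functors; an object is injectively fibrant if its unique map to the terminal object has the right lifting property with respect to all morphisms whose underlying functor is injective on objects and an equivalence of groupoids. $\kappa$ is an inaccessible cardinal. $U_\Delta$: objects $(A_0,A_1,\varphi)$ with $A_0,A_1$ sets of cardinality $<\kappa$ and $\varphi:A_0\to A_1$ a bijection; morphisms $(A_0,A_1,\varphi)\to(B_0,B_1,\psi)$ are pairs of bijections $(\rho_0,\rho_1)$ with $\psi\rho_0=\rho_1\varphi$; involution $(A_0,A_1,\varphi)\mapsto(A_1,A_0,\varphi^{-1})$, $(\rho_0,\rho_1)\mapsto(\rho_1,\rho_0)$. $\widetilde{U}_\Delta$: objects $(A_0,A_1,a,\varphi)$ with $a\in A_0$; morphisms those $(\rho_0,\rho_1)$ with $\rho_0(a)=b$; involution $(A_0,A_1,a,\varphi)\mapsto(A_1,A_0,\varphi(a),\varphi^{-1})$, $(\rho_0,\rho_1)\mapsto(\rho_1,\rho_0)$. *)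

theory Defs
  imports Main "HOL-Library.FuncSet"
begin

unbundle cardinal_syntax

definition inaccessible :: "'k rel \<Rightarrow> bool" where
  "inaccessible \<kappa> \<longleftrightarrow>
     Card_order \<kappa> \<and> natLeq <o \<kappa> \<and> regularCard \<kappa> \<and>
     (\<forall>A. A \<subseteq> Field \<kappa> \<and> |A| <o \<kappa> \<longrightarrow> |Pow A| <o \<kappa>)"

text \<open>A (possibly large) groupoid: a set of objects, a set of arrows, domain, codomain,
  identities and composition ( cmp g f  is  g after f ).\<close>

record ('o, 'a) igpd =
  Ob :: "'o set"
  Ar :: "'a set"
  gdom :: "'a \<Rightarrow> 'o"
  gcod :: "'a \<Rightarrow> 'o"
  idn :: "'o \<Rightarrow> 'a"
  cmp :: "'a \<Rightarrow> 'a \<Rightarrow> 'a"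
  iob :: "'o \<Rightarrow> 'o"
  iar :: "'a \<Rightarrow> 'a"

definition groupoid :: "('o, 'a) igpd \<Rightarrow> bool" where
  "groupoid G \<longleftrightarrow>
     (\<forall>f\<in>Ar G. gdom G f \<in> Ob G \<and> gcod G f \<in> Ob G) \<and>
     (\<forall>x\<in>Ob G. idn G x \<in> Ar G \<and> gdom G (idn G x) = x \<and> gcod G (idn G x) = x) \<and>
     (\<forall>f\<in>Ar G. \<forall>g\<in>Ar G. gcod G f = gdom G g \<longrightarrow>
        cmp G g f \<in> Ar G \<and> gdom G (cmp G g f) = gdom G f \<and> gcod G (cmp G g f) = gcod G g) \<and>
     (\<forall>f\<in>Ar G. cmp G (idn G (gcod G f)) f = f \<and> cmp G f (idn G (gdom G f)) = f) \<and>
     (\<forall>f\<in>Ar G. \<forall>g\<in>Ar G. \<forall>h\<in>Ar G. gcod G f = gdom G g \<longrightarrow> gcod G g = gdom G h \<longrightarrow>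
        cmp G h (cmp G g f) = cmp G (cmp G h g) f) \<and>
     (\<forall>f\<in>Ar G. \<exists>g\<in>Ar G. gdom G g = gcod G f \<and> gcod G g = gdom G f \<and>
        cmp G g f = idn G (gdom G f) \<and> cmp G f g = idn G (gcod G f))"

definition functor_betw ::
  "('o, 'a) igpd \<Rightarrow> ('p, 'b) igpd \<Rightarrow> ('o \<Rightarrow> 'p) \<Rightarrow> ('a \<Rightarrow> 'b) \<Rightarrow> bool" where
  "functor_betw G H Fo Fa \<longleftrightarrow>
     Fo \<in> Ob G \<rightarrow> Ob H \<and> Fa \<in> Ar G \<rightarrow> Ar H \<and>
     (\<forall>f\<in>Ar G. gdom H (Fa f) = Fo (gdom G f) \<and> gcod H (Fa f) = Fo (gcod G f)) \<and>
     (\<forall>x\<in>Ob G. Fa (idn G x) = idn H (Fo x)) \<and>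
     (\<forall>f\<in>Ar G. \<forall>g\<in>Ar G. gcod G f = gdom G g \<longrightarrow> Fa (cmp G g f) = cmp H (Fa g) (Fa f))"

text \<open>An object of Gpd^G: a groupoid with a strict involution (a functor squaring to the identity).\<close>

definition igroupoid :: "('o, 'a) igpd \<Rightarrow> bool" where
  "igroupoid G \<longleftrightarrow> groupoid G \<and> functor_betw G G (iob G) (iar G) \<and>
     (\<forall>x\<in>Ob G. iob G (iob G x) = x) \<and> (\<forall>f\<in>Ar G. iar G (iar G f) = f)"

definition equivariant ::
  "('o, 'a) igpd \<Rightarrow> ('p, 'b) igpd \<Rightarrow> ('o \<Rightarrow> 'p) \<Rightarrow> ('a \<Rightarrow> 'b) \<Rightarrow> bool" where
  "equivariant G H Fo Fa \<longleftrightarrow> functor_betw G H Fo Fa \<and>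
     (\<forall>x\<in>Ob G. Fo (iob G x) = iob H (Fo x)) \<and> (\<forall>f\<in>Ar G. Fa (iar G f) = iar H (Fa f))"

text \<open>Natural transformation  eta : F => K  between functors G -> H (every component is an
  isomorphism since H is a groupoid, so this is a natural isomorphism).\<close>

definition nat_trans ::
  "('o, 'a) igpd \<Rightarrow> ('p, 'b) igpd \<Rightarrow> ('o \<Rightarrow> 'p) \<Rightarrow> ('a \<Rightarrow> 'b) \<Rightarrow> ('o \<Rightarrow> 'p) \<Rightarrow> ('a \<Rightarrow> 'b)
     \<Rightarrow> ('o \<Rightarrow> 'b) \<Rightarrow> bool" where
  "nat_trans G H Fo Fa Ko Ka \<eta> \<longleftrightarrow>
     (\<forall>x\<in>Ob G. \<eta> x \<in> Ar H \<and> gdom H (\<eta> x) = Fo x \<and> gcod H (\<eta> x) = Ko x) \<and>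
     (\<forall>f\<in>Ar G. cmp H (\<eta> (gcod G f)) (Fa f) = cmp H (Ka f) (\<eta> (gdom G f)))"

definition gpd_equivalence ::
  "('o, 'a) igpd \<Rightarrow> ('p, 'b) igpd \<Rightarrow> ('o \<Rightarrow> 'p) \<Rightarrow> ('a \<Rightarrow> 'b) \<Rightarrow> bool" where
  "gpd_equivalence G H Fo Fa \<longleftrightarrow> functor_betw G H Fo Fa \<and>
     (\<exists>(Ko :: 'p \<Rightarrow> 'o) (Ka :: 'b \<Rightarrow> 'a) \<eta> \<epsilon>. functor_betw H G Ko Ka \<and>
        nat_trans G G (\<lambda>x. x) (\<lambda>f. f) (Ko \<circ> Fo) (Ka \<circ> Fa) \<eta> \<and>
        nat_trans H H (Fo \<circ> Ko) (Fa \<circ> Ka) (\<lambda>y. y) (\<lambda>g. g) \<epsilon>)"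

text \<open>The lifting condition: the unique map  X -> 1  has the right lifting property with
  respect to the morphism  (io, ia) : A -> B  of Gpd^G, provided the latter is injective on
  objects and an equivalence of groupoids.  (Since  1  is terminal, a lifting problem is just
  a morphism  A -> X  that must be extended along  A -> B .)\<close>

definition lifts_against ::
  "('x, 'y) igpd \<Rightarrow> ('o, 'a) igpd \<Rightarrow> ('p, 'b) igpd \<Rightarrow> ('o \<Rightarrow> 'p) \<Rightarrow> ('a \<Rightarrow> 'b) \<Rightarrow> bool" where
  "lifts_against X A B io ia \<longleftrightarrow>
     (igroupoid A \<and> igroupoid B \<and> equivariant A B io ia \<and> inj_on io (Ob A) \<and>
      gpd_equivalence A B io ia) \<longrightarrow>
     (\<forall>fo fa. equivariant A X fo fa \<longrightarrow>
        (\<exists>go ga. equivariant B X go ga \<and>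
           (\<forall>x\<in>Ob A. go (io x) = fo x) \<and> (\<forall>f\<in>Ar A. ga (ia f) = fa f)))"

text \<open>Objects  (A0, A1, phi) ; functions are kept extensional (undefined off their domain),
  so that a bijection  A0 -> A1  has a unique representative.\<close>

type_synonym 'u dobj = "'u set \<times> 'u set \<times> ('u \<Rightarrow> 'u)"
type_synonym 'u darr = "'u dobj \<times> 'u dobj \<times> ('u \<Rightarrow> 'u) \<times> ('u \<Rightarrow> 'u)"

definition UD_obj :: "'k rel \<Rightarrow> 'u dobj set" where
  "UD_obj \<kappa> = {(A0, A1, \<phi>). |A0| <o \<kappa> \<and> |A1| <o \<kappa> \<and> bij_betw \<phi> A0 A1 \<and> \<phi> \<in> extensional A0}"

definition UD_arr :: "'k rel \<Rightarrow> 'u darr set" where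
  "UD_arr \<kappa> = {((A0, A1, \<phi>), (B0, B1, \<psi>), \<rho>0, \<rho>1).
     (A0, A1, \<phi>) \<in> UD_obj \<kappa> \<and> (B0, B1, \<psi>) \<in> UD_obj \<kappa> \<and>
     bij_betw \<rho>0 A0 B0 \<and> \<rho>0 \<in> extensional A0 \<and> bij_betw \<rho>1 A1 B1 \<and> \<rho>1 \<in> extensional A1 \<and>
     (\<forall>x\<in>A0. \<psi> (\<rho>0 x) = \<rho>1 (\<phi> x))}"

definition dinv :: "'u dobj \<Rightarrow> 'u dobj" where
  "dinv X = (case X of (A0, A1, \<phi>) \<Rightarrow> (A1, A0, restrict (inv_into A0 \<phi>) A1))"

definition U_Delta :: "'k rel \<Rightarrow> ('u dobj, 'u darr) igpd" where
  "U_Delta \<kappa> = \<lparr>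
     Ob = UD_obj \<kappa>,
     Ar = UD_arr \<kappa>,
     gdom = (\<lambda>(X, Y, \<rho>0, \<rho>1). X),
     gcod = (\<lambda>(X, Y, \<rho>0, \<rho>1). Y),
     idn = (\<lambda>(A0, A1, \<phi>). ((A0, A1, \<phi>), (A0, A1, \<phi>), restrict id A0, restrict id A1)),
     cmp = (\<lambda>(Y, Z, \<sigma>0, \<sigma>1) ((A0, A1, \<phi>), Y', \<rho>0, \<rho>1).
              ((A0, A1, \<phi>), Z, compose A0 \<sigma>0 \<rho>0, compose A1 \<sigma>1 \<rho>1)),
     iob = dinv,
     iar = (\<lambda>(X, Y, \<rho>0, \<rho>1). (dinv X, dinv Y, \<rho>1, \<rho>0)) \<rparr>"

type_synonym 'u pobj = "'u set \<times> 'u set \<times> 'u \<times> ('u \<Rightarrow> 'u)"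
type_synonym 'u parr = "'u pobj \<times> 'u pobj \<times> ('u \<Rightarrow> 'u) \<times> ('u \<Rightarrow> 'u)"

definition UtD_obj :: "'k rel \<Rightarrow> 'u pobj set" where
  "UtD_obj \<kappa> = {(A0, A1, a, \<phi>). (A0, A1, \<phi>) \<in> UD_obj \<kappa> \<and> a \<in> A0}"

definition UtD_arr :: "'k rel \<Rightarrow> 'u parr set" where
  "UtD_arr \<kappa> = {((A0, A1, a, \<phi>), (B0, B1, b, \<psi>), \<rho>0, \<rho>1).
     (A0, A1, a, \<phi>) \<in> UtD_obj \<kappa> \<and> (B0, B1, b, \<psi>) \<in> UtD_obj \<kappa> \<and>
     ((A0, A1, \<phi>), (B0, B1, \<psi>), \<rho>0, \<rho>1) \<in> UD_arr \<kappa> \<and> \<rho>0 a = b}"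

definition pinv :: "'u pobj \<Rightarrow> 'u pobj" where
  "pinv X = (case X of (A0, A1, a, \<phi>) \<Rightarrow> (A1, A0, \<phi> a, restrict (inv_into A0 \<phi>) A1))"

definition Ut_Delta :: "'k rel \<Rightarrow> ('u pobj, 'u parr) igpd" where
  "Ut_Delta \<kappa> = \<lparr>
     Ob = UtD_obj \<kappa>,
     Ar = UtD_arr \<kappa>,
     gdom = (\<lambda>(X, Y, \<rho>0, \<rho>1). X),
     gcod = (\<lambda>(X, Y, \<rho>0, \<rho>1). Y),
     idn = (\<lambda>(A0, A1, a, \<phi>). ((A0, A1, a, \<phi>), (A0, A1, a, \<phi>), restrict id A0, restrict id A1)),
     cmp = (\<lambda>(Y, Z, \<sigma>0, \<sigma>1) ((A0, A1, a, \<phi>), Y', \<rho>0, \<rho>1).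
              ((A0, A1, a, \<phi>), Z, compose A0 \<sigma>0 \<rho>0, compose A1 \<sigma>1 \<rho>1)),
     iob = pinv,
     iar = (\<lambda>(X, Y, \<rho>0, \<rho>1). (pinv X, pinv Y, \<rho>1, \<rho>0)) \<rparr>"

end

theory Submission
  imports Defs
begin


definition hom :: "('o,'a) igpd \<Rightarrow> 'o \<Rightarrow> 'o \<Rightarrow> 'a set" where
  "hom G x y = {f \<in> Ar G. gdom G f = x \<and> gcod G f = y}"

definition ginv :: "('o,'a) igpd \<Rightarrow> 'a \<Rightarrow> 'a" where
  "ginv G f = (SOME g. g \<in> hom G (gcod G f) (gdom G f) \<and> cmp G g f = idn G (gdom G f) \<and> cmp G f g = idn G (gcod G f))"

lemma homI[intro]: "f \<in> Ar G \<Longrightarrow> gdom G f = x \<Longrightarrow> gcod G f = y \<Longrightarrow> f \<in> hom G x y"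
  by (simp add: hom_def)
lemma homD: "f \<in> hom G x y \<Longrightarrow> f \<in> Ar G" "f \<in> hom G x y \<Longrightarrow> gdom G f = x" "f \<in> hom G x y \<Longrightarrow> gcod G f = y"
  by (auto simp: hom_def)
lemma hom_ar: "f \<in> Ar G \<Longrightarrow> f \<in> hom G (gdom G f) (gcod G f)"
  by (simp add: hom_def)

context fixes G :: "('o,'a) igpd" assumes gG: "groupoid G" begin
lemma ar_cmp: "f \<in> Ar G \<Longrightarrow> g \<in> Ar G \<Longrightarrow> gcod G f = gdom G g \<Longrightarrow> cmp G g f \<in> Ar G"
  using gG unfolding groupoid_def by auto
lemma dom_cmp: "f \<in> Ar G \<Longrightarrow> g \<in> Ar G \<Longrightarrow> gcod G f = gdom G g \<Longrightarrow> gdom G (cmp G g f) = gdom G f"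
  using gG unfolding groupoid_def by auto
lemma cod_cmp: "f \<in> Ar G \<Longrightarrow> g \<in> Ar G \<Longrightarrow> gcod G f = gdom G g \<Longrightarrow> gcod G (cmp G g f) = gcod G g"
  using gG unfolding groupoid_def by auto
lemma ar_idn: "x \<in> Ob G \<Longrightarrow> idn G x \<in> Ar G" using gG unfolding groupoid_def by auto
lemma dom_idn: "x \<in> Ob G \<Longrightarrow> gdom G (idn G x) = x" using gG unfolding groupoid_def by auto
lemma cod_idn: "x \<in> Ob G \<Longrightarrow> gcod G (idn G x) = x" using gG unfolding groupoid_def by auto
lemma ob_dom: "f \<in> Ar G \<Longrightarrow> gdom G f \<in> Ob G" using gG unfolding groupoid_def by auto
lemma ob_cod: "f \<in> Ar G \<Longrightarrow> gcod G f \<in> Ob G" using gG unfolding groupoid_def by auto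
lemma assoc_r: "f \<in> Ar G \<Longrightarrow> g \<in> Ar G \<Longrightarrow> h \<in> Ar G \<Longrightarrow> gcod G f = gdom G g \<Longrightarrow> gcod G g = gdom G h \<Longrightarrow>
   cmp G (cmp G h g) f = cmp G h (cmp G g f)"
  using gG unfolding groupoid_def by auto
lemma idl': "f \<in> Ar G \<Longrightarrow> gcod G f = y \<Longrightarrow> cmp G (idn G y) f = f"
  using gG unfolding groupoid_def by auto
lemma idr': "f \<in> Ar G \<Longrightarrow> gdom G f = y \<Longrightarrow> cmp G f (idn G y) = f"
  using gG unfolding groupoid_def by auto

lemma ginv_props: assumes "f \<in> Ar G"
  shows "ginv G f \<in> Ar G \<and> gdom G (ginv G f) = gcod G f \<and> gcod G (ginv G f) = gdom G f \<and>
     cmp G (ginv G f) f = idn G (gdom G f) \<and> cmp G f (ginv G f) = idn G (gcod G f)"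
proof -
  have "\<exists>g. g \<in> hom G (gcod G f) (gdom G f) \<and> cmp G g f = idn G (gdom G f) \<and> cmp G f g = idn G (gcod G f)"
    using gG assms unfolding groupoid_def hom_def by auto
  from someI_ex[OF this] show ?thesis unfolding ginv_def by (auto simp: hom_def)
qed
lemma ar_ginv: "f \<in> Ar G \<Longrightarrow> ginv G f \<in> Ar G" using ginv_props by blast
lemma dom_ginv: "f \<in> Ar G \<Longrightarrow> gdom G (ginv G f) = gcod G f" using ginv_props by blast
lemma cod_ginv: "f \<in> Ar G \<Longrightarrow> gcod G (ginv G f) = gdom G f" using ginv_props by blast
lemma ginvl': "f \<in> Ar G \<Longrightarrow> cmp G (ginv G f) f = idn G (gdom G f)" using ginv_props by blast
lemma ginvr': "f \<in> Ar G \<Longrightarrow> cmp G f (ginv G f) = idn G (gcod G f)" using ginv_props by blast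
lemma ginvl2: assumes "f \<in> Ar G" "g \<in> Ar G" "gcod G g = gdom G f" shows "cmp G (ginv G f) (cmp G f g) = g"
proof -
  have "cmp G (cmp G (ginv G f) f) g = cmp G (ginv G f) (cmp G f g)"
    by (rule assoc_r) (simp_all add: assms ar_ginv dom_ginv)
  then show ?thesis using assms by (simp add: ginvl' idl')
qed
lemma ginvr2: assumes "f \<in> Ar G" "g \<in> Ar G" "gcod G g = gcod G f" shows "cmp G f (cmp G (ginv G f) g) = g"
proof -
  have "cmp G (cmp G f (ginv G f)) g = cmp G f (cmp G (ginv G f) g)"
    by (rule assoc_r) (simp_all add: assms ar_ginv dom_ginv cod_ginv)
  then show ?thesis using assms by (simp add: ginvr' idl')
qed
lemma inv_uniq: assumes "f \<in> Ar G" "g \<in> Ar G" "gdom G g = gcod G f" "gcod G g = gdom G f"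
  "cmp G g f = idn G (gdom G f)" shows "ginv G f = g"
proof -
  have "g = cmp G g (cmp G f (ginv G f))" using assms by (simp add: ginvr' idr')
  also have "\<dots> = cmp G (cmp G g f) (ginv G f)"
    by (rule assoc_r[symmetric]) (simp_all add: assms ar_ginv cod_ginv)
  also have "\<dots> = ginv G f" using assms by (simp add: idl' ar_ginv cod_ginv)
  finally show ?thesis by simp
qed
lemma ginv_ginv': "f \<in> Ar G \<Longrightarrow> ginv G (ginv G f) = f"
  by (rule inv_uniq) (simp_all add: ar_ginv dom_ginv cod_ginv ginvr')
lemma ginv_idn': "x \<in> Ob G \<Longrightarrow> ginv G (idn G x) = idn G x"
  by (rule inv_uniq) (simp_all add: ar_idn dom_idn cod_idn idl')
lemma ginv_cmp': assumes "f \<in> Ar G" "g \<in> Ar G" "gcod G f = gdom G g"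
  shows "ginv G (cmp G g f) = cmp G (ginv G f) (ginv G g)"
proof (rule inv_uniq)
  have "cmp G (cmp G (ginv G f) (ginv G g)) (cmp G g f) = cmp G (ginv G f) (cmp G (ginv G g) (cmp G g f))"
    by (rule assoc_r) (simp_all add: assms ar_ginv dom_ginv cod_ginv ar_cmp dom_cmp cod_cmp)
  also have "\<dots> = idn G (gdom G (cmp G g f))" using assms by (simp add: ginvl2 ginvl' dom_cmp)
  finally show "cmp G (cmp G (ginv G f) (ginv G g)) (cmp G g f) = idn G (gdom G (cmp G g f))" .
qed (simp_all add: assms ar_ginv dom_ginv cod_ginv ar_cmp dom_cmp cod_cmp)

lemmas gsimps = ar_cmp dom_cmp cod_cmp ar_ginv dom_ginv cod_ginv ar_idn dom_idn cod_idn ob_dom ob_cod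
  assoc_r idl' idr' ginvl' ginvr' ginvl2 ginvr2 ginv_cmp' ginv_ginv' ginv_idn' hom_def

lemma hom_obs: "f \<in> hom G x y \<Longrightarrow> x \<in> Ob G" "f \<in> hom G x y \<Longrightarrow> y \<in> Ob G"
  using gG by (auto simp: groupoid_def hom_def)
lemma idn_hom: "x \<in> Ob G \<Longrightarrow> idn G x \<in> hom G x x" by (simp add: gsimps)
lemma cmp_hom: "f \<in> hom G x y \<Longrightarrow> g \<in> hom G y z \<Longrightarrow> cmp G g f \<in> hom G x z" by (simp add: gsimps)
lemma ginv_hom: "f \<in> hom G x y \<Longrightarrow> ginv G f \<in> hom G y x" by (simp add: gsimps)
lemma cancel_l: assumes "h \<in> hom G y z" "f \<in> hom G x y" "f' \<in> hom G x y" "cmp G h f = cmp G h f'"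
  shows "f = f'"
proof -
  have "cmp G (ginv G h) (cmp G h f) = cmp G (ginv G h) (cmp G h f')" using assms by simp
  then show ?thesis using assms(1-3) by (simp add: gsimps)
qed
lemma cancel_r: assumes "h \<in> hom G x y" "f \<in> hom G y z" "f' \<in> hom G y z" "cmp G f h = cmp G f' h"
  shows "f = f'"
proof -
  have "cmp G (cmp G f h) (ginv G h) = cmp G (cmp G f' h) (ginv G h)" using assms by simp
  then show ?thesis using assms(1-3) by (simp add: gsimps)
qed
end

lemma fun_hom: "functor_betw G H Fo Fa \<Longrightarrow> f \<in> hom G x y \<Longrightarrow> Fa f \<in> hom H (Fo x) (Fo y)"
  unfolding functor_betw_def hom_def by auto
lemma fun_ob: "functor_betw G H Fo Fa \<Longrightarrow> x \<in> Ob G \<Longrightarrow> Fo x \<in> Ob H"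
  unfolding functor_betw_def by auto
lemma fun_idn: "functor_betw G H Fo Fa \<Longrightarrow> x \<in> Ob G \<Longrightarrow> Fa (idn G x) = idn H (Fo x)"
  unfolding functor_betw_def by auto
lemma fun_cmp: "functor_betw G H Fo Fa \<Longrightarrow> f \<in> hom G x y \<Longrightarrow> g \<in> hom G y z \<Longrightarrow>
   Fa (cmp G g f) = cmp H (Fa g) (Fa f)"
  unfolding functor_betw_def hom_def by auto
lemma fun_ginv: assumes gG: "groupoid G" and gH: "groupoid H" and F: "functor_betw G H Fo Fa" and f: "f \<in> hom G x y"
  shows "Fa (ginv G f) = ginv H (Fa f)"
proof -
  have i: "ginv G f \<in> hom G y x" using ginv_hom[OF gG f] .
  have "Fa (cmp G (ginv G f) f) = idn H (Fo x)"
    using f gG F hom_obs[OF gG f] by (simp add: gsimps[OF gG] fun_idn)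
  then have e: "cmp H (Fa (ginv G f)) (Fa f) = idn H (Fo x)" using fun_cmp[OF F f i] by simp
  have "ginv H (Fa f) = Fa (ginv G f)"
    using fun_hom[OF F f] fun_hom[OF F i] e unfolding hom_def
    by (intro inv_uniq[OF gH]) auto
  then show ?thesis by simp
qed




definition conj :: "('o,'a) igpd \<Rightarrow> 'a \<Rightarrow> 'a \<Rightarrow> 'a \<Rightarrow> 'a" where
  "conj G s h t = cmp G s (cmp G h (ginv G t))"

context fixes G :: "('o,'a) igpd" assumes gG: "groupoid G" begin
lemma C_hom: "s \<in> hom G y2 z2 \<Longrightarrow> h \<in> hom G y1 y2 \<Longrightarrow> t \<in> hom G y1 z1 \<Longrightarrow> conj G s h t \<in> hom G z1 z2"
  unfolding conj_def by (simp add: gsimps[OF gG])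
lemma C_ends: assumes "h \<in> hom G x y" shows "conj G (idn G y) h (idn G x) = h"
  unfolding conj_def using assms hom_obs[OF gG assms] by (simp add: gsimps[OF gG])
lemma C_mid: "s \<in> hom G y z \<Longrightarrow> conj G s (idn G y) s = idn G z"
  unfolding conj_def by (simp add: gsimps[OF gG])
lemma C_cmp: assumes "s1 \<in> hom G y1 z1" "s2 \<in> hom G y2 z2" "s3 \<in> hom G y3 z3" "k \<in> hom G y1 y2" "h \<in> hom G y2 y3"
  shows "cmp G (conj G s3 h s2) (conj G s2 k s1) = conj G s3 (cmp G h k) s1"
  using assms unfolding conj_def by (simp add: gsimps[OF gG])
lemma C_ginv: assumes "s \<in> hom G y2 z2" "h \<in> hom G y1 y2" "t \<in> hom G y1 z1"
  shows "ginv G (conj G s h t) = conj G t (ginv G h) s"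
  using assms unfolding conj_def by (simp add: gsimps[OF gG])
lemma C_assoc: assumes "r \<in> hom G y1 w1" "t \<in> hom G w1 v1" "r' \<in> hom G y2 w2" "s \<in> hom G w2 v2" "K \<in> hom G y1 y2"
  shows "conj G (cmp G s r') K (cmp G t r) = conj G s (conj G r' K r) t"
  using assms unfolding conj_def by (simp add: gsimps[OF gG])
lemma C_cancel: assumes "b \<in> hom G y1 z1" "b' \<in> hom G y2 z2" "H \<in> hom G y1 y2"
  shows "conj G (ginv G b') (conj G b' H b) (ginv G b) = H"
  using assms unfolding conj_def by (simp add: gsimps[OF gG])
end

lemma C_fun: assumes "groupoid G" "groupoid H" "functor_betw G H Fo Fa"
  "s \<in> hom G y2 z2" "h \<in> hom G y1 y2" "t \<in> hom G y1 z1"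
  shows "Fa (conj G s h t) = conj H (Fa s) (Fa h) (Fa t)"
proof -
  have i: "ginv G t \<in> hom G z1 y1" using ginv_hom[OF assms(1,6)] .
  have c: "cmp G h (ginv G t) \<in> hom G z1 y2" using cmp_hom[OF assms(1) i assms(5)] .
  show ?thesis unfolding conj_def
    using fun_cmp[OF assms(3) c assms(4)] fun_cmp[OF assms(3) i assms(5)] fun_ginv[OF assms(1-3,6)] by simp
qed

lemma igpd_groupoid: "igroupoid G \<Longrightarrow> groupoid G" by (simp add: igroupoid_def)
lemma igpd_fun: "igroupoid G \<Longrightarrow> functor_betw G G (iob G) (iar G)" by (simp add: igroupoid_def)
lemma igpd_iob2: "igroupoid G \<Longrightarrow> x \<in> Ob G \<Longrightarrow> iob G (iob G x) = x" by (simp add: igroupoid_def)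
lemma igpd_iar2: "igroupoid G \<Longrightarrow> f \<in> hom G x y \<Longrightarrow> iar G (iar G f) = f" by (simp add: igroupoid_def hom_def)
lemma eq_fun: "equivariant G H Fo Fa \<Longrightarrow> functor_betw G H Fo Fa" by (simp add: equivariant_def)
lemma eq_ob: "equivariant G H Fo Fa \<Longrightarrow> x \<in> Ob G \<Longrightarrow> Fo (iob G x) = iob H (Fo x)" by (simp add: equivariant_def)
lemma eq_ar: "equivariant G H Fo Fa \<Longrightarrow> f \<in> hom G x y \<Longrightarrow> Fa (iar G f) = iar H (Fa f)" by (simp add: equivariant_def hom_def)


lemma (in -) C_3: assumes gG: "groupoid G" and "s3 \<in> hom G y3 z3" "s2 \<in> hom G y3 w3" "h \<in> hom G y1 y3"
  "t2 \<in> hom G y1 w1" "s1 \<in> hom G y1 z1"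
  shows "conj G (conj G s3 (idn G y3) s2) (conj G s2 h t2) (conj G s1 (idn G y1) t2) = conj G s3 h s1"
  using assms hom_obs[OF gG assms(2)] hom_obs[OF gG assms(6)] unfolding conj_def by (simp add: gsimps[OF gG])
lemma (in -) C_4: assumes gG: "groupoid G" and "b \<in> hom G u1 v1" "b' \<in> hom G u2 v2" "c \<in> hom G w1 u1"
  "c' \<in> hom G w2 u2" "H \<in> hom G u1 u2"
  shows "conj G (ginv G (cmp G b' c')) (conj G b' H b) (ginv G (cmp G b c)) = conj G (ginv G c') H (ginv G c)"
  using assms unfolding conj_def by (simp add: gsimps[OF gG])




definition pre :: "('o,'a) igpd \<Rightarrow> ('a \<Rightarrow> 'b) \<Rightarrow> 'o \<Rightarrow> 'o \<Rightarrow> 'b \<Rightarrow> 'a" where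
  "pre A ia a a' g = (THE f. f \<in> hom A a a' \<and> ia f = g)"

locale lift_setup =
  fixes X :: "('x,'y) igpd" and A :: "('o,'a) igpd" and B :: "('p,'b) igpd"
    and io :: "'o \<Rightarrow> 'p" and ia :: "'a \<Rightarrow> 'b" and fo :: "'o \<Rightarrow> 'x" and fa :: "'a \<Rightarrow> 'y"
    and Ko :: "'p \<Rightarrow> 'o" and Ka :: "'b \<Rightarrow> 'a" and eta :: "'o \<Rightarrow> 'a" and eps :: "'p \<Rightarrow> 'b"
    and Yf :: "'x \<Rightarrow> 'x \<Rightarrow> 'y \<Rightarrow> 'x" and Cf :: "'x \<Rightarrow> 'x \<Rightarrow> 'y \<Rightarrow> 'y"
  assumes iX: "igroupoid X" and iA: "igroupoid A" and iB: "igroupoid B"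
   and eqAB: "equivariant A B io ia" and inj: "inj_on io (Ob A)"
   and K: "functor_betw B A Ko Ka"
   and nt1: "nat_trans A A (\<lambda>x. x) (\<lambda>f. f) (Ko \<circ> io) (Ka \<circ> ia) eta"
   and nt2: "nat_trans B B (io \<circ> Ko) (ia \<circ> Ka) (\<lambda>y. y) (\<lambda>g. g) eps"
   and eqAX: "equivariant A X fo fa"
   and XP1: "\<And>x x' \<beta>. x \<in> Ob X \<Longrightarrow> x' \<in> Ob X \<Longrightarrow> \<beta> \<in> hom X (iob X x) x' \<Longrightarrow>
        Yf x x' \<beta> \<in> Ob X \<and> Cf x x' \<beta> \<in> hom X (Yf x x' \<beta>) x"
   and XP2: "\<And>x x' \<beta>. x \<in> Ob X \<Longrightarrow> x' \<in> Ob X \<Longrightarrow> \<beta> \<in> hom X (iob X x) x' \<Longrightarrow>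
        Yf x' x (ginv X (iar X \<beta>)) = iob X (Yf x x' \<beta>) \<and> Cf x' x (ginv X (iar X \<beta>)) = cmp X \<beta> (iar X (Cf x x' \<beta>))"
   and XP3: "\<And>x. x \<in> Ob X \<Longrightarrow> Yf x (iob X x) (idn X (iob X x)) = x \<and> Cf x (iob X x) (idn X (iob X x)) = idn X x"
begin

lemma gX: "groupoid X" using iX igpd_groupoid by blast
lemma gA: "groupoid A" using iA igpd_groupoid by blast
lemma gB: "groupoid B" using iB igpd_groupoid by blast
lemma F: "functor_betw A B io ia" using eqAB eq_fun by blast
lemma FX: "functor_betw A X fo fa" using eqAX eq_fun by blast
lemma jX: "functor_betw X X (iob X) (iar X)" using iX igpd_fun by blast
lemma jA: "functor_betw A A (iob A) (iar A)" using iA igpd_fun by blast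
lemma jB: "functor_betw B B (iob B) (iar B)" using iB igpd_fun by blast

lemma eta: "x \<in> Ob A \<Longrightarrow> eta x \<in> hom A x (Ko (io x))"
  using nt1 unfolding nat_trans_def hom_def by auto
lemma eta_nat: "f \<in> hom A x y \<Longrightarrow> cmp A (eta y) f = cmp A (Ka (ia f)) (eta x)"
  using nt1 unfolding nat_trans_def hom_def by auto
lemma eps: "y \<in> Ob B \<Longrightarrow> eps y \<in> hom B (io (Ko y)) y"
  using nt2 unfolding nat_trans_def hom_def by auto
lemma eps_nat: "g \<in> hom B y y' \<Longrightarrow> cmp B (eps y') (ia (Ka g)) = cmp B g (eps y)"
  using nt2 unfolding nat_trans_def hom_def by auto

lemma faithF: assumes "f \<in> hom A x y" "f' \<in> hom A x y" "ia f = ia f'" shows "f = f'"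
proof -
  have "cmp A (eta y) f = cmp A (eta y) f'" using eta_nat[OF assms(1)] eta_nat[OF assms(2)] assms(3) by simp
  then show ?thesis using cancel_l[OF gA eta[OF hom_obs(2)[OF gA assms(1)]] assms(1,2)] by simp
qed
lemma faithK: assumes "g \<in> hom B x y" "g' \<in> hom B x y" "Ka g = Ka g'" shows "g = g'"
proof -
  have "cmp B g (eps x) = cmp B g' (eps x)" using eps_nat[OF assms(1)] eps_nat[OF assms(2)] assms(3) by simp
  then show ?thesis using cancel_r[OF gB eps[OF hom_obs(1)[OF gB assms(1)]] assms(1,2)] by simp
qed
lemma fullF: assumes a: "a \<in> Ob A" and a': "a' \<in> Ob A" and g: "g \<in> hom B (io a) (io a')"
  shows "\<exists>f. f \<in> hom A a a' \<and> ia f = g"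
proof -
  define f where "f = cmp A (ginv A (eta a')) (cmp A (Ka g) (eta a))"
  have Kg: "Ka g \<in> hom A (Ko (io a)) (Ko (io a'))" using fun_hom[OF K g] .
  note e1 = eta[OF a] and e2 = eta[OF a']
  have fh: "f \<in> hom A a a'" unfolding f_def using Kg e1 e2 by (simp add: gsimps[OF gA])
  have "cmp A (Ka (ia f)) (eta a) = cmp A (eta a') f" using eta_nat[OF fh] by simp
  also have "\<dots> = cmp A (Ka g) (eta a)" unfolding f_def using Kg e1 e2 by (simp add: gsimps[OF gA])
  finally have "Ka (ia f) = Ka g"
    using cancel_r[OF gA e1 fun_hom[OF K fun_hom[OF F fh]] Kg] by simp
  then have "ia f = g" using faithK[OF fun_hom[OF F fh] g] by simp
  then show ?thesis using fh by blast
qed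
lemma pre: assumes "a \<in> Ob A" "a' \<in> Ob A" "g \<in> hom B (io a) (io a')"
  shows "pre A ia a a' g \<in> hom A a a' \<and> ia (pre A ia a a' g) = g"
proof -
  have "\<exists>!f. f \<in> hom A a a' \<and> ia f = g" using fullF[OF assms] faithF by blast
  from theI'[OF this] show ?thesis unfolding pre_def .
qed
lemma pre_eq: assumes "f \<in> hom A a a'" "ia f = g" shows "pre A ia a a' g = f"
  unfolding pre_def using assms faithF by blast

definition ab where "ab b = (if b \<in> io ` Ob A then the_inv_into (Ob A) io b else Ko b)"
definition th where "th b = (if b \<in> io ` Ob A then idn B b else ginv B (eps b))"
definition gam where "gam b = conj B (th (iob B b)) (idn B (iob B b)) (iar B (th b))"
definition al where "al b = pre A ia (iob A (ab b)) (ab (iob B b)) (gam b)"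
definition xb where "xb b = fo (ab b)"
definition be where "be b = fa (al b)"
definition go where "go b = Yf (xb b) (xb (iob B b)) (be b)"
definition chi where "chi b = Cf (xb b) (xb (iob B b)) (be b)"
definition rho where "rho b b' g = pre A ia (ab b) (ab b') (conj B (th b') g (th b))"
definition ga where "ga g = conj X (ginv X (chi (gcod B g))) (fa (rho (gdom B g) (gcod B g) g)) (ginv X (chi (gdom B g)))"

lemma jB_ob: "b \<in> Ob B \<Longrightarrow> iob B b \<in> Ob B" using fun_ob[OF jB] .
lemma jA_ob: "a \<in> Ob A \<Longrightarrow> iob A a \<in> Ob A" using fun_ob[OF jA] .
lemma jX_ob: "a \<in> Ob X \<Longrightarrow> iob X a \<in> Ob X" using fun_ob[OF jX] .
lemma jjB: "b \<in> Ob B \<Longrightarrow> iob B (iob B b) = b" using igpd_iob2[OF iB] .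
lemma jjA: "b \<in> Ob A \<Longrightarrow> iob A (iob A b) = b" using igpd_iob2[OF iA] .
lemma io_ob: "a \<in> Ob A \<Longrightarrow> io a \<in> Ob B" using fun_ob[OF F] .
lemma fo_ob: "a \<in> Ob A \<Longrightarrow> fo a \<in> Ob X" using fun_ob[OF FX] .
lemma io_j: "a \<in> Ob A \<Longrightarrow> io (iob A a) = iob B (io a)" using eq_ob[OF eqAB] .
lemma fo_j: "a \<in> Ob A \<Longrightarrow> fo (iob A a) = iob X (fo a)" using eq_ob[OF eqAX] .

lemma ab_ob: "b \<in> Ob B \<Longrightarrow> ab b \<in> Ob A"
  unfolding ab_def using fun_ob[OF K] the_inv_into_into[OF inj] by (auto simp: image_iff)
lemma ab_io: "a \<in> Ob A \<Longrightarrow> ab (io a) = a"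
  unfolding ab_def using the_inv_into_f_f[OF inj] by auto
lemma th_io: "a \<in> Ob A \<Longrightarrow> th (io a) = idn B (io a)"
  unfolding th_def by auto
lemma th_hom: assumes b: "b \<in> Ob B" shows "th b \<in> hom B b (io (ab b))"
proof (cases "b \<in> io ` Ob A")
  case True
  then obtain a where a: "a \<in> Ob A" "b = io a" by auto
  then show ?thesis using idn_hom[OF gB b] by (simp add: th_io ab_io)
next
  case False
  then show ?thesis unfolding th_def ab_def using ginv_hom[OF gB eps[OF b]] by simp
qed

lemma gam_hom: assumes b: "b \<in> Ob B" shows "gam b \<in> hom B (io (iob A (ab b))) (io (ab (iob B b)))"
proof -
  have "iar B (th b) \<in> hom B (iob B b) (io (iob A (ab b)))"
    using fun_hom[OF jB th_hom[OF b]] io_j[OF ab_ob[OF b]] by simp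
  then show ?thesis unfolding gam_def
    using C_hom[OF gB th_hom[OF jB_ob[OF b]] idn_hom[OF gB jB_ob[OF b]]] by blast
qed
lemma al: assumes b: "b \<in> Ob B" shows "al b \<in> hom A (iob A (ab b)) (ab (iob B b)) \<and> ia (al b) = gam b"
  unfolding al_def using pre[OF jA_ob[OF ab_ob[OF b]] ab_ob[OF jB_ob[OF b]] gam_hom[OF b]] .

lemma al_inv: assumes b: "b \<in> Ob B" shows "al (iob B b) = ginv A (iar A (al b))"
proof -
  have a1: "al b \<in> hom A (iob A (ab b)) (ab (iob B b))" using al[OF b] by blast
  have ka: "iar A (al b) \<in> hom A (ab b) (iob A (ab (iob B b)))"
    using fun_hom[OF jA a1] jjA[OF ab_ob[OF b]] by simp
  have a2: "al (iob B b) \<in> hom A (iob A (ab (iob B b))) (ab b)" using al[OF jB_ob[OF b]] jjB[OF b] by simp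
  have c: "cmp A (al (iob B b)) (iar A (al b)) \<in> hom A (ab b) (ab b)" using cmp_hom[OF gA ka a2] .
  note tb = th_hom[OF b] and tjb = th_hom[OF jB_ob[OF b]]
  have ktjb: "iar B (th (iob B b)) \<in> hom B b (iob B (io (ab (iob B b))))"
    using fun_hom[OF jB tjb] jjB[OF b] by simp
  have g1: "gam (iob B b) = conj B (th b) (idn B b) (iar B (th (iob B b)))"
    unfolding gam_def using jjB[OF b] by simp
  have g2: "iar B (gam b) = conj B (iar B (th (iob B b))) (idn B b) (th b)"
    unfolding gam_def
    using C_fun[OF gB gB jB tjb idn_hom[OF gB jB_ob[OF b]] fun_hom[OF jB tb]]
      fun_idn[OF jB jB_ob[OF b]] jjB[OF b] igpd_iar2[OF iB tb] by simp
  have "ia (cmp A (al (iob B b)) (iar A (al b))) = cmp B (gam (iob B b)) (iar B (gam b))"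
    using fun_cmp[OF F ka a2] al[OF jB_ob[OF b]] eq_ar[OF eqAB a1] al[OF b] by simp
  also have "\<dots> = conj B (th b) (cmp B (idn B b) (idn B b)) (th b)"
    unfolding g1 g2 by (rule C_cmp[OF gB tb ktjb tb]) (simp_all add: idn_hom[OF gB b])
  also have "\<dots> = idn B (io (ab b))" using C_mid[OF gB tb] idl'[OF gB ar_idn[OF gB b] cod_idn[OF gB b]] by simp
  also have "\<dots> = ia (idn A (ab b))" using fun_idn[OF F ab_ob[OF b]] by simp
  finally have "cmp A (al (iob B b)) (iar A (al b)) = idn A (ab b)"
    using faithF[OF c idn_hom[OF gA ab_ob[OF b]]] by blast
  then have "ginv A (iar A (al b)) = al (iob B b)" using ka a2 by (intro inv_uniq[OF gA]) (auto simp: hom_def)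
  then show ?thesis by simp
qed

lemma xb_ob: "b \<in> Ob B \<Longrightarrow> xb b \<in> Ob X" unfolding xb_def using fo_ob ab_ob by blast
lemma be_hom: assumes b: "b \<in> Ob B" shows "be b \<in> hom X (iob X (xb b)) (xb (iob B b))"
  unfolding be_def xb_def using fun_hom[OF FX conjunct1[OF al[OF b]]] fo_j[OF ab_ob[OF b]] by simp
lemma go_chi: assumes b: "b \<in> Ob B" shows "go b \<in> Ob X \<and> chi b \<in> hom X (go b) (xb b)"
  unfolding go_def chi_def using XP1[OF xb_ob[OF b] xb_ob[OF jB_ob[OF b]] be_hom[OF b]] .
lemma be_inv: assumes b: "b \<in> Ob B" shows "be (iob B b) = ginv X (iar X (be b))"
proof -
  have a1: "al b \<in> hom A (iob A (ab b)) (ab (iob B b))" using al[OF b] by blast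
  have ka: "iar A (al b) \<in> hom A (ab b) (iob A (ab (iob B b)))"
    using fun_hom[OF jA a1] jjA[OF ab_ob[OF b]] by simp
  show ?thesis unfolding be_def al_inv[OF b] using fun_ginv[OF gA gX FX ka] eq_ar[OF eqAX a1] by simp
qed
lemma go_j: assumes b: "b \<in> Ob B" shows "go (iob B b) = iob X (go b) \<and> chi (iob B b) = cmp X (be b) (iar X (chi b))"
  unfolding go_def chi_def using XP2[OF xb_ob[OF b] xb_ob[OF jB_ob[OF b]] be_hom[OF b]] be_inv[OF b] jjB[OF b] by simp

lemma rho: assumes g: "g \<in> hom B b b'"
  shows "rho b b' g \<in> hom A (ab b) (ab b') \<and> ia (rho b b' g) = conj B (th b') g (th b)"
proof -
  have b: "b \<in> Ob B" "b' \<in> Ob B" using hom_obs[OF gB g] by auto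
  show ?thesis unfolding rho_def
    by (rule pre[OF ab_ob[OF b(1)] ab_ob[OF b(2)] C_hom[OF gB th_hom[OF b(2)] g th_hom[OF b(1)]]])
qed
lemma ga_hom: assumes g: "g \<in> hom B b b'" shows "ga g \<in> hom X (go b) (go b')"
proof -
  have b: "b \<in> Ob B" "b' \<in> Ob B" using hom_obs[OF gB g] by auto
  have gd: "gdom B g = b" "gcod B g = b'" using g by (auto simp: hom_def)
  show ?thesis unfolding ga_def gd
    using C_hom[OF gX ginv_hom[OF gX conjunct2[OF go_chi[OF b(2)]]] fun_hom[OF FX conjunct1[OF rho[OF g]], folded xb_def]
       ginv_hom[OF gX conjunct2[OF go_chi[OF b(1)]]]] xb_def by simp
qed
lemma ga_idn: assumes b: "b \<in> Ob B" shows "ga (idn B b) = idn X (go b)"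
proof -
  have i: "idn B b \<in> hom B b b" using idn_hom[OF gB b] .
  have gd: "gdom B (idn B b) = b" "gcod B (idn B b) = b" using i by (auto simp: hom_def)
  have "rho b b (idn B b) = idn A (ab b)"
    unfolding rho_def using C_mid[OF gB th_hom[OF b]] fun_idn[OF F ab_ob[OF b]]
    by (intro pre_eq idn_hom[OF gA ab_ob[OF b]]) simp
  then show ?thesis unfolding ga_def gd
    using fun_idn[OF FX ab_ob[OF b]] C_mid[OF gX ginv_hom[OF gX conjunct2[OF go_chi[OF b]]]] xb_def by simp
qed
lemma ga_cmp: assumes f: "f \<in> hom B b b'" and g: "g \<in> hom B b' b''"
  shows "ga (cmp B g f) = cmp X (ga g) (ga f)"
proof -
  have b: "b \<in> Ob B" "b' \<in> Ob B" "b'' \<in> Ob B" using hom_obs[OF gB f] hom_obs[OF gB g] by auto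
  have gf: "cmp B g f \<in> hom B b b''" using cmp_hom[OF gB f g] .
  have gd: "gdom B (cmp B g f) = b" "gcod B (cmp B g f) = b''" "gdom B f = b" "gcod B f = b'"
     "gdom B g = b'" "gcod B g = b''" using gf f g by (auto simp: hom_def)
  note rf = rho[OF f] and rg = rho[OF g]
  have "rho b b'' (cmp B g f) = cmp A (rho b' b'' g) (rho b b' f)"
    unfolding rho_def[of b b'' "cmp B g f"]
  proof (rule pre_eq)
    show "cmp A (rho b' b'' g) (rho b b' f) \<in> hom A (ab b) (ab b'')" using rf rg cmp_hom[OF gA] by blast
    show "ia (cmp A (rho b' b'' g) (rho b b' f)) = conj B (th b'') (cmp B g f) (th b)"
      using fun_cmp[OF F conjunct1[OF rf] conjunct1[OF rg]] rf rg
        C_cmp[OF gB th_hom[OF b(1)] th_hom[OF b(2)] th_hom[OF b(3)] f g] by simp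
  qed
  then have e: "fa (rho b b'' (cmp B g f)) = cmp X (fa (rho b' b'' g)) (fa (rho b b' f))"
    using fun_cmp[OF FX conjunct1[OF rf] conjunct1[OF rg]] by simp
  show ?thesis unfolding ga_def gd e
    using C_cmp[OF gX ginv_hom[OF gX conjunct2[OF go_chi[OF b(1)]]] ginv_hom[OF gX conjunct2[OF go_chi[OF b(2)]]]
       ginv_hom[OF gX conjunct2[OF go_chi[OF b(3)]]]] fun_hom[OF FX conjunct1[OF rf]] fun_hom[OF FX conjunct1[OF rg]]
    unfolding xb_def by simp
qed

lemma ga_j: assumes g: "g \<in> hom B b b'" shows "ga (iar B g) = iar X (ga g)"
proof -
  have b: "b \<in> Ob B" "b' \<in> Ob B" using hom_obs[OF gB g] by auto
  have kg: "iar B g \<in> hom B (iob B b) (iob B b')" using fun_hom[OF jB g] .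
  have gd: "gdom B (iar B g) = iob B b" "gcod B (iar B g) = iob B b'" "gdom B g = b" "gcod B g = b'"
    using g kg by (auto simp: hom_def)
  note rg = rho[OF g]
  have al1: "al b \<in> hom A (iob A (ab b)) (ab (iob B b))" using al[OF b(1)] by blast
  have al2: "al b' \<in> hom A (iob A (ab b')) (ab (iob B b'))" using al[OF b(2)] by blast
  have kr: "iar A (rho b b' g) \<in> hom A (iob A (ab b)) (iob A (ab b'))" using fun_hom[OF jA conjunct1[OF rg]] .
  note tb = th_hom[OF b(1)] and tb' = th_hom[OF b(2)] and tjb = th_hom[OF jB_ob[OF b(1)]] and tjb' = th_hom[OF jB_ob[OF b(2)]]
  have ktb: "iar B (th b) \<in> hom B (iob B b) (io (iob A (ab b)))"
    using fun_hom[OF jB tb] io_j[OF ab_ob[OF b(1)]] by simp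
  have ktb': "iar B (th b') \<in> hom B (iob B b') (io (iob A (ab b')))"
    using fun_hom[OF jB tb'] io_j[OF ab_ob[OF b(2)]] by simp
  have "rho (iob B b) (iob B b') (iar B g) = conj A (al b') (iar A (rho b b' g)) (al b)"
    unfolding rho_def[of "iob B b" "iob B b'" "iar B g"]
  proof (rule pre_eq)
    show "conj A (al b') (iar A (rho b b' g)) (al b) \<in> hom A (ab (iob B b)) (ab (iob B b'))"
      using C_hom[OF gA al2 kr al1] .
    have "ia (conj A (al b') (iar A (rho b b' g)) (al b)) = conj B (gam b') (iar B (conj B (th b') g (th b))) (gam b)"
      using C_fun[OF gA gB F al2 kr al1] al[OF b(1)] al[OF b(2)] eq_ar[OF eqAB conjunct1[OF rg]] rg by simp
    also have "\<dots> = conj B (gam b') (conj B (iar B (th b')) (iar B g) (iar B (th b))) (gam b)"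
      using C_fun[OF gB gB jB tb' g tb] by simp
    also have "\<dots> = conj B (th (iob B b')) (iar B g) (th (iob B b))"
      unfolding gam_def by (rule C_3[OF gB tjb' ktb' kg ktb tjb])
    finally show "ia (conj A (al b') (iar A (rho b b' g)) (al b)) = conj B (th (iob B b')) (iar B g) (th (iob B b))" .
  qed
  then have e: "fa (rho (iob B b) (iob B b') (iar B g)) = conj X (be b') (iar X (fa (rho b b' g))) (be b)"
    unfolding be_def using C_fun[OF gA gX FX al2 kr al1] eq_ar[OF eqAX conjunct1[OF rg]] by simp
  have ch1: "chi b \<in> hom X (go b) (xb b)" and ch2: "chi b' \<in> hom X (go b') (xb b')"
    using go_chi[OF b(1)] go_chi[OF b(2)] by auto
  have kc1: "iar X (chi b) \<in> hom X (iob X (go b)) (iob X (xb b))" using fun_hom[OF jX ch1] .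
  have kc2: "iar X (chi b') \<in> hom X (iob X (go b')) (iob X (xb b'))" using fun_hom[OF jX ch2] .
  have fr: "fa (rho b b' g) \<in> hom X (xb b) (xb b')" using fun_hom[OF FX conjunct1[OF rg]] unfolding xb_def .
  have kfr: "iar X (fa (rho b b' g)) \<in> hom X (iob X (xb b)) (iob X (xb b'))" using fun_hom[OF jX fr] .
  have "ga (iar B g) = conj X (ginv X (cmp X (be b') (iar X (chi b')))) (conj X (be b') (iar X (fa (rho b b' g))) (be b))
        (ginv X (cmp X (be b) (iar X (chi b))))"
    unfolding ga_def gd e using go_j[OF b(1)] go_j[OF b(2)] by simp
  also have "\<dots> = conj X (ginv X (iar X (chi b'))) (iar X (fa (rho b b' g))) (ginv X (iar X (chi b)))"
    by (rule C_4[OF gX be_hom[OF b(1)] be_hom[OF b(2)] kc1 kc2 kfr])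
  also have "\<dots> = iar X (ga g)"
    unfolding ga_def gd
    using C_fun[OF gX gX jX ginv_hom[OF gX ch2] fr ginv_hom[OF gX ch1]] fun_ginv[OF gX gX jX ch1] fun_ginv[OF gX gX jX ch2]
    by simp
  finally show ?thesis .
qed

lemma ext_ob: assumes x: "x \<in> Ob A" shows "go (io x) = fo x \<and> chi (io x) = idn X (fo x)"
proof -
  have jx: "iob B (io x) = io (iob A x)" using io_j[OF x] by simp
  have "gam (io x) = idn B (io (iob A x))"
    unfolding gam_def jx th_io[OF x] th_io[OF jA_ob[OF x]]
    using fun_idn[OF jB io_ob[OF x]] jx C_ends[OF gB idn_hom[OF gB io_ob[OF jA_ob[OF x]]]] by simp
  then have "al (io x) = idn A (iob A x)"
    unfolding al_def jx ab_io[OF x] ab_io[OF jA_ob[OF x]]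
    using fun_idn[OF F jA_ob[OF x]] by (intro pre_eq idn_hom[OF gA jA_ob[OF x]]) simp
  then have "be (io x) = idn X (iob X (fo x))" unfolding be_def using fun_idn[OF FX jA_ob[OF x]] fo_j[OF x] by simp
  then show ?thesis unfolding go_def chi_def xb_def jx ab_io[OF x] ab_io[OF jA_ob[OF x]] fo_j[OF x]
    using XP3[OF fo_ob[OF x]] by simp
qed
lemma ext_ar: assumes f: "f \<in> hom A x y" shows "ga (ia f) = fa f"
proof -
  have xy: "x \<in> Ob A" "y \<in> Ob A" using hom_obs[OF gA f] by auto
  have iaf: "ia f \<in> hom B (io x) (io y)" using fun_hom[OF F f] .
  have gd: "gdom B (ia f) = io x" "gcod B (ia f) = io y" using iaf by (auto simp: hom_def)
  have "rho (io x) (io y) (ia f) = f"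
    unfolding rho_def ab_io[OF xy(1)] ab_io[OF xy(2)] th_io[OF xy(1)] th_io[OF xy(2)] C_ends[OF gB iaf]
    using pre_eq[OF f] by simp
  then show ?thesis unfolding ga_def gd
    using ext_ob[OF xy(1)] ext_ob[OF xy(2)] ginv_idn'[OF gX fo_ob[OF xy(1)]] ginv_idn'[OF gX fo_ob[OF xy(2)]]
      C_ends[OF gX fun_hom[OF FX f]] by simp
qed

lemma lift: "equivariant B X go ga \<and> (\<forall>x\<in>Ob A. go (io x) = fo x) \<and> (\<forall>f\<in>Ar A. ga (ia f) = fa f)"
proof -
  have fb: "functor_betw B X go ga"
    unfolding functor_betw_def
  proof (intro conjI ballI impI)
    show "go \<in> Ob B \<rightarrow> Ob X" using go_chi by blast
    show "ga \<in> Ar B \<rightarrow> Ar X" using ga_hom[OF hom_ar] by (auto simp: hom_def)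
    fix f assume "f \<in> Ar B"
    then show "gdom X (ga f) = go (gdom B f)" "gcod X (ga f) = go (gcod B f)"
      using ga_hom[OF hom_ar] by (auto simp: hom_def)
  next
    fix x assume "x \<in> Ob B" then show "ga (idn B x) = idn X (go x)" using ga_idn by blast
  next
    fix f g assume "f \<in> Ar B" "g \<in> Ar B" "gcod B f = gdom B g"
    then show "ga (cmp B g f) = cmp X (ga g) (ga f)"
      using ga_cmp[OF hom_ar[of f B], of g] hom_ar[of g B] by simp
  qed
  have "equivariant B X go ga"
    unfolding equivariant_def using fb go_j ga_j[OF hom_ar] by blast
  moreover have "\<forall>x\<in>Ob A. go (io x) = fo x" using ext_ob by blast
  moreover have "\<forall>f\<in>Ar A. ga (ia f) = fa f" using ext_ar[OF hom_ar] by blast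
  ultimately show ?thesis by blast
qed

end

theorem generic_lifts:
  fixes X :: "('x,'y) igpd" and Yf :: "'x \<Rightarrow> 'x \<Rightarrow> 'y \<Rightarrow> 'x" and Cf :: "'x \<Rightarrow> 'x \<Rightarrow> 'y \<Rightarrow> 'y"
  assumes iX: "igroupoid X"
   and XP1: "\<And>x x' \<beta>. x \<in> Ob X \<Longrightarrow> x' \<in> Ob X \<Longrightarrow> \<beta> \<in> hom X (iob X x) x' \<Longrightarrow>
        Yf x x' \<beta> \<in> Ob X \<and> Cf x x' \<beta> \<in> hom X (Yf x x' \<beta>) x"
   and XP2: "\<And>x x' \<beta>. x \<in> Ob X \<Longrightarrow> x' \<in> Ob X \<Longrightarrow> \<beta> \<in> hom X (iob X x) x' \<Longrightarrow>
        Yf x' x (ginv X (iar X \<beta>)) = iob X (Yf x x' \<beta>) \<and> Cf x' x (ginv X (iar X \<beta>)) = cmp X \<beta> (iar X (Cf x x' \<beta>))"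
   and XP3: "\<And>x. x \<in> Ob X \<Longrightarrow> Yf x (iob X x) (idn X (iob X x)) = x \<and> Cf x (iob X x) (idn X (iob X x)) = idn X x"
  shows "lifts_against X A B io ia"
  unfolding lifts_against_def
proof (intro impI allI)
  fix fo fa
  assume H: "igroupoid A \<and> igroupoid B \<and> equivariant A B io ia \<and> inj_on io (Ob A) \<and> gpd_equivalence A B io ia"
    and E: "equivariant A X fo fa"
  then obtain Ko Ka eta eps where K: "functor_betw B A Ko Ka"
    and n1: "nat_trans A A (\<lambda>x. x) (\<lambda>f. f) (Ko \<circ> io) (Ka \<circ> ia) eta"
    and n2: "nat_trans B B (io \<circ> Ko) (ia \<circ> Ka) (\<lambda>y. y) (\<lambda>g. g) eps"
    unfolding gpd_equivalence_def by blast
  interpret L: lift_setup X A B io ia fo fa Ko Ka eta eps Yf Cf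
    using H E K n1 n2 iX XP1 XP2 XP3 by unfold_locales blast+
  show "\<exists>go ga. equivariant B X go ga \<and> (\<forall>x\<in>Ob A. go (io x) = fo x) \<and> (\<forall>f\<in>Ar A. ga (ia f) = fa f)"
    using L.lift by blast
qed




lemma darr_cases:
  fixes f :: "'u darr"
  obtains A0 A1 \<phi> B0 B1 \<psi> r0 r1 where "f = ((A0,A1,\<phi>),(B0,B1,\<psi>),r0,r1)"
  using that[of "fst (fst f)" "fst (snd (fst f))" "snd (snd (fst f))" "fst (fst (snd f))"
      "fst (snd (fst (snd f)))" "snd (snd (fst (snd f)))" "fst (snd (snd f))" "snd (snd (snd f))"] by simp
lemma dobj_cases:
  fixes X :: "'u dobj"
  obtains A0 A1 \<phi> where "X = (A0,A1,\<phi>)"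
  using that[of "fst X" "fst (snd X)" "snd (snd X)"] by simp

lemma UD_ob_iff[simp]: "(A0,A1,\<phi>) \<in> UD_obj \<kappa> \<longleftrightarrow> |A0| <o \<kappa> \<and> |A1| <o \<kappa> \<and> bij_betw \<phi> A0 A1 \<and> \<phi> \<in> extensional A0"
  by (simp add: UD_obj_def)
lemma UD_ar_iff[simp]: "((A0,A1,\<phi>),(B0,B1,\<psi>),r0,r1) \<in> UD_arr \<kappa> \<longleftrightarrow>
   (A0,A1,\<phi>) \<in> UD_obj \<kappa> \<and> (B0,B1,\<psi>) \<in> UD_obj \<kappa> \<and> bij_betw r0 A0 B0 \<and> r0 \<in> extensional A0 \<and>
   bij_betw r1 A1 B1 \<and> r1 \<in> extensional A1 \<and> (\<forall>x\<in>A0. \<psi> (r0 x) = r1 (\<phi> x))"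
  by (simp add: UD_arr_def)
lemma dinv_simp[simp]: "dinv (A0,A1,\<phi>) = (A1,A0,restrict (inv_into A0 \<phi>) A1)"
  by (simp add: dinv_def)

lemma UD_simps[simp]:
  "Ob (U_Delta \<kappa>) = UD_obj \<kappa>" "Ar (U_Delta \<kappa>) = UD_arr \<kappa>"
  "gdom (U_Delta \<kappa>) (X,Y,r0,r1) = X" "gcod (U_Delta \<kappa>) (X,Y,r0,r1) = Y"
  "idn (U_Delta \<kappa>) (A0,A1,\<phi>) = ((A0,A1,\<phi>),(A0,A1,\<phi>),restrict id A0, restrict id A1)"
  "cmp (U_Delta \<kappa>) (Y,Z,s0,s1) ((A0,A1,\<phi>),Y',r0,r1) = ((A0,A1,\<phi>),Z,compose A0 s0 r0, compose A1 s1 r1)"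
  "iob (U_Delta \<kappa>) = dinv" "iar (U_Delta \<kappa>) (X,Y,r0,r1) = (dinv X, dinv Y, r1, r0)"
  by (simp_all add: U_Delta_def)

lemma rid: "restrict id A = (\<lambda>x\<in>A. x)" by (simp add: id_def)
lemma bij_id': "bij_betw (\<lambda>x. x) A A" by (simp add: bij_betw_def)
lemma compose_Id': "compose A g (\<lambda>x\<in>A. x) = restrict g A" by (auto simp: compose_def)
lemma bij_inj: "bij_betw f A B \<Longrightarrow> inj_on f A" by (simp add: bij_betw_def)

lemma U_idn_ar: "(A0,A1,\<phi>) \<in> UD_obj \<kappa> \<Longrightarrow> ((A0,A1,\<phi>),(A0,A1,\<phi>),restrict id A0, restrict id A1) \<in> UD_arr \<kappa>"
  by (auto simp: rid bij_betw_apply bij_id')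

lemma U_cmp_ar: assumes "((A0,A1,\<phi>),(B0,B1,\<psi>),r0,r1) \<in> UD_arr \<kappa>" "((B0,B1,\<psi>),(C0,C1,\<chi>),s0,s1) \<in> UD_arr \<kappa>"
  shows "((A0,A1,\<phi>),(C0,C1,\<chi>),compose A0 s0 r0, compose A1 s1 r1) \<in> UD_arr \<kappa>"
  using assms by (auto simp: bij_betw_compose compose_eq bij_betw_apply)

lemma U_inv_ar: assumes "((A0,A1,\<phi>),(B0,B1,\<psi>),r0,r1) \<in> UD_arr \<kappa>"
  shows "((B0,B1,\<psi>),(A0,A1,\<phi>),restrict (inv_into A0 r0) B0, restrict (inv_into A1 r1) B1) \<in> UD_arr \<kappa>"
proof -
  have "\<forall>y\<in>B0. \<phi> (inv_into A0 r0 y) = inv_into A1 r1 (\<psi> y)"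
  proof
    fix y assume y: "y \<in> B0"
    have x: "inv_into A0 r0 y \<in> A0" "r0 (inv_into A0 r0 y) = y"
      using assms y by (auto simp: bij_betw_def inv_into_into f_inv_into_f)
    have "\<psi> y = r1 (\<phi> (inv_into A0 r0 y))" using assms x by force
    moreover have "\<phi> (inv_into A0 r0 y) \<in> A1" using assms x bij_betw_apply by force
    ultimately show "\<phi> (inv_into A0 r0 y) = inv_into A1 r1 (\<psi> y)"
      using assms inv_into_f_f[OF bij_inj] by force
  qed
  moreover have "\<forall>y\<in>B0. \<psi> y \<in> B1" using assms bij_betw_apply by force
  ultimately show ?thesis using assms by (auto simp: bij_betw_inv_into)
qed

lemma U_dinv_ob: "(A0,A1,\<phi>) \<in> UD_obj \<kappa> \<Longrightarrow> dinv (A0,A1,\<phi>) \<in> UD_obj \<kappa>"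
  by (auto simp: bij_betw_inv_into)

lemma U_dinv2: "(A0,A1,\<phi>) \<in> UD_obj \<kappa> \<Longrightarrow> dinv (dinv (A0,A1,\<phi>)) = (A0,A1,\<phi>)"
  apply simp
  apply (rule extensionalityI[where A=A0])
    apply simp_all
  apply (rule inv_into_f_eq)
    apply (auto simp: bij_betw_def inv_into_into inj_on_inv_into)
  done

lemma U_iar_ar: assumes "((A0,A1,\<phi>),(B0,B1,\<psi>),r0,r1) \<in> UD_arr \<kappa>"
  shows "(dinv (A0,A1,\<phi>), dinv (B0,B1,\<psi>), r1, r0) \<in> UD_arr \<kappa>"
proof -
  have "\<forall>y\<in>A1. inv_into B0 \<psi> (r1 y) = r0 (inv_into A0 \<phi> y)"
  proof
    fix y assume y: "y \<in> A1"
    have x: "inv_into A0 \<phi> y \<in> A0" "\<phi> (inv_into A0 \<phi> y) = y"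
      using assms y by (auto simp: bij_betw_def inv_into_into f_inv_into_f)
    have "r1 y = \<psi> (r0 (inv_into A0 \<phi> y))" using assms x by force
    moreover have "r0 (inv_into A0 \<phi> y) \<in> B0" using assms x bij_betw_apply by force
    ultimately show "inv_into B0 \<psi> (r1 y) = r0 (inv_into A0 \<phi> y)"
      using assms inv_into_f_f[OF bij_inj] by force
  qed
  moreover have "\<forall>y\<in>A1. r1 y \<in> B1" using assms bij_betw_apply by force
  ultimately show ?thesis using assms by (auto simp: bij_betw_inv_into)
qed

lemma U_groupoid: "groupoid (U_Delta \<kappa>)"
  unfolding groupoid_def
proof (intro conjI ballI impI)
  fix f assume f: "f \<in> Ar (U_Delta \<kappa>)"
  obtain A0 A1 \<phi> B0 B1 \<psi> r0 r1 where fe: "f = ((A0,A1,\<phi>),(B0,B1,\<psi>),r0,r1)" by (rule darr_cases)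
  show "gdom (U_Delta \<kappa>) f \<in> Ob (U_Delta \<kappa>)" "gcod (U_Delta \<kappa>) f \<in> Ob (U_Delta \<kappa>)"
    using f unfolding fe by (simp_all del: UD_ob_iff)
  show "cmp (U_Delta \<kappa>) (idn (U_Delta \<kappa>) (gcod (U_Delta \<kappa>) f)) f = f"
    using f unfolding fe by (simp add: rid Id_compose bij_betw_imp_funcset)
  show "cmp (U_Delta \<kappa>) f (idn (U_Delta \<kappa>) (gdom (U_Delta \<kappa>) f)) = f"
    using f unfolding fe by (simp add: rid compose_Id' extensional_restrict)
  let ?g = "((B0,B1,\<psi>),(A0,A1,\<phi>),restrict (inv_into A0 r0) B0, restrict (inv_into A1 r1) B1)"
  have g: "?g \<in> UD_arr \<kappa>" using U_inv_ar[of A0 A1 \<phi> B0 B1 \<psi> r0 r1 \<kappa>] f fe by (simp del: UD_ar_iff)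
  have "cmp (U_Delta \<kappa>) ?g f = idn (U_Delta \<kappa>) (gdom (U_Delta \<kappa>) f)"
    using f unfolding fe by (simp add: rid compose_inv_into_id)
  moreover have "cmp (U_Delta \<kappa>) f ?g = idn (U_Delta \<kappa>) (gcod (U_Delta \<kappa>) f)"
    using f unfolding fe by (simp add: rid compose_id_inv_into bij_betw_def)
  ultimately show "\<exists>g\<in>Ar (U_Delta \<kappa>). gdom (U_Delta \<kappa>) g = gcod (U_Delta \<kappa>) f \<and> gcod (U_Delta \<kappa>) g = gdom (U_Delta \<kappa>) f \<and>
          cmp (U_Delta \<kappa>) g f = idn (U_Delta \<kappa>) (gdom (U_Delta \<kappa>) f) \<and> cmp (U_Delta \<kappa>) f g = idn (U_Delta \<kappa>) (gcod (U_Delta \<kappa>) f)"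
    using g by (intro bexI[of _ ?g] conjI) (simp_all add: fe del: UD_ar_iff)
next
  fix x assume x: "x \<in> Ob (U_Delta \<kappa>)"
  obtain A0 A1 \<phi> where xe: "x = (A0,A1,\<phi>)" by (rule dobj_cases)
  show "idn (U_Delta \<kappa>) x \<in> Ar (U_Delta \<kappa>)" using U_idn_ar[of A0 A1 \<phi> \<kappa>] x xe by simp
  show "gdom (U_Delta \<kappa>) (idn (U_Delta \<kappa>) x) = x" "gcod (U_Delta \<kappa>) (idn (U_Delta \<kappa>) x) = x" using xe by simp_all
next
  fix f g assume f: "f \<in> Ar (U_Delta \<kappa>)" and g: "g \<in> Ar (U_Delta \<kappa>)" and c: "gcod (U_Delta \<kappa>) f = gdom (U_Delta \<kappa>) g"
  obtain A0 A1 \<phi> B0 B1 \<psi> r0 r1 where fe: "f = ((A0,A1,\<phi>),(B0,B1,\<psi>),r0,r1)" by (rule darr_cases)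
  obtain B0' B1' \<psi>' C0 C1 \<chi> s0 s1 where ge: "g = ((B0',B1',\<psi>'),(C0,C1,\<chi>),s0,s1)" by (rule darr_cases)
  have e: "B0' = B0" "B1' = B1" "\<psi>' = \<psi>" using c fe ge by auto
  show "cmp (U_Delta \<kappa>) g f \<in> Ar (U_Delta \<kappa>)" using U_cmp_ar[of A0 A1 \<phi> B0 B1 \<psi> r0 r1 \<kappa> C0 C1 \<chi> s0 s1] f g unfolding fe ge e by (simp del: UD_ar_iff)
  show "gdom (U_Delta \<kappa>) (cmp (U_Delta \<kappa>) g f) = gdom (U_Delta \<kappa>) f" "gcod (U_Delta \<kappa>) (cmp (U_Delta \<kappa>) g f) = gcod (U_Delta \<kappa>) g"
    unfolding fe ge by simp_all
next
  fix f g h assume f: "f \<in> Ar (U_Delta \<kappa>)" and g: "g \<in> Ar (U_Delta \<kappa>)" and h: "h \<in> Ar (U_Delta \<kappa>)"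
    and c1: "gcod (U_Delta \<kappa>) f = gdom (U_Delta \<kappa>) g" and c2: "gcod (U_Delta \<kappa>) g = gdom (U_Delta \<kappa>) h"
  obtain A0 A1 \<phi> B0 B1 \<psi> r0 r1 where fe: "f = ((A0,A1,\<phi>),(B0,B1,\<psi>),r0,r1)" by (rule darr_cases)
  obtain B0' B1' \<psi>' C0 C1 \<chi> s0 s1 where ge: "g = ((B0',B1',\<psi>'),(C0,C1,\<chi>),s0,s1)" by (rule darr_cases)
  obtain C0' C1' \<chi>' D0 D1 \<omega> t0 t1 where he: "h = ((C0',C1',\<chi>'),(D0,D1,\<omega>),t0,t1)" by (rule darr_cases)
  have e: "B0' = B0" "B1' = B1" "\<psi>' = \<psi>" "C0' = C0" "C1' = C1" "\<chi>' = \<chi>" using c1 c2 fe ge he by auto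
  show "cmp (U_Delta \<kappa>) h (cmp (U_Delta \<kappa>) g f) = cmp (U_Delta \<kappa>) (cmp (U_Delta \<kappa>) h g) f"
    using f unfolding fe ge he e by (simp add: compose_assoc bij_betw_imp_funcset)
qed

lemma U_igroupoid: "igroupoid (U_Delta \<kappa>)"
  unfolding igroupoid_def
proof (intro conjI ballI)
  show "groupoid (U_Delta \<kappa>)" by (rule U_groupoid)
  show "functor_betw (U_Delta \<kappa>) (U_Delta \<kappa>) (iob (U_Delta \<kappa>)) (iar (U_Delta \<kappa>))"
    unfolding functor_betw_def
  proof (intro conjI ballI impI)
    show "iob (U_Delta \<kappa>) \<in> Ob (U_Delta \<kappa>) \<rightarrow> Ob (U_Delta \<kappa>)"
      using U_dinv_ob by (auto simp del: UD_ob_iff dinv_simp elim!: dobj_cases)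
    show "iar (U_Delta \<kappa>) \<in> Ar (U_Delta \<kappa>) \<rightarrow> Ar (U_Delta \<kappa>)"
    proof
      fix f assume f: "f \<in> Ar (U_Delta \<kappa>)"
      obtain A0 A1 \<phi> B0 B1 \<psi> r0 r1 where fe: "f = ((A0,A1,\<phi>),(B0,B1,\<psi>),r0,r1)" by (rule darr_cases)
      show "iar (U_Delta \<kappa>) f \<in> Ar (U_Delta \<kappa>)" using U_iar_ar[of A0 A1 \<phi> B0 B1 \<psi> r0 r1 \<kappa>] f unfolding fe
        by (simp del: UD_ar_iff dinv_simp)
    qed
  next
    fix f assume f: "f \<in> Ar (U_Delta \<kappa>)"
    obtain A0 A1 \<phi> B0 B1 \<psi> r0 r1 where fe: "f = ((A0,A1,\<phi>),(B0,B1,\<psi>),r0,r1)" by (rule darr_cases)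
    show "gdom (U_Delta \<kappa>) (iar (U_Delta \<kappa>) f) = iob (U_Delta \<kappa>) (gdom (U_Delta \<kappa>) f)"
         "gcod (U_Delta \<kappa>) (iar (U_Delta \<kappa>) f) = iob (U_Delta \<kappa>) (gcod (U_Delta \<kappa>) f)"
      unfolding fe by (simp_all del: dinv_simp)
  next
    fix x assume x: "x \<in> Ob (U_Delta \<kappa>)"
    obtain A0 A1 \<phi> where xe: "x = (A0,A1,\<phi>)" by (rule dobj_cases)
    show "iar (U_Delta \<kappa>) (idn (U_Delta \<kappa>) x) = idn (U_Delta \<kappa>) (iob (U_Delta \<kappa>) x)" unfolding xe by simp
  next
    fix f g assume f: "f \<in> Ar (U_Delta \<kappa>)" and g: "g \<in> Ar (U_Delta \<kappa>)" and c: "gcod (U_Delta \<kappa>) f = gdom (U_Delta \<kappa>) g"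
    obtain A0 A1 \<phi> B0 B1 \<psi> r0 r1 where fe: "f = ((A0,A1,\<phi>),(B0,B1,\<psi>),r0,r1)" by (rule darr_cases)
    obtain B0' B1' \<psi>' C0 C1 \<chi> s0 s1 where ge: "g = ((B0',B1',\<psi>'),(C0,C1,\<chi>),s0,s1)" by (rule darr_cases)
    have e: "B0' = B0" "B1' = B1" "\<psi>' = \<psi>" using c fe ge by auto
    show "iar (U_Delta \<kappa>) (cmp (U_Delta \<kappa>) g f) = cmp (U_Delta \<kappa>) (iar (U_Delta \<kappa>) g) (iar (U_Delta \<kappa>) f)"
      unfolding fe ge e by simp
  qed
next
  fix x assume x: "x \<in> Ob (U_Delta \<kappa>)"
  obtain A0 A1 \<phi> where xe: "x = (A0,A1,\<phi>)" by (rule dobj_cases)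
  show "iob (U_Delta \<kappa>) (iob (U_Delta \<kappa>) x) = x" using U_dinv2[of A0 A1 \<phi> \<kappa>] x unfolding xe
    by (simp del: dinv_simp UD_ob_iff)
next
  fix f assume f: "f \<in> Ar (U_Delta \<kappa>)"
  obtain A0 A1 \<phi> B0 B1 \<psi> r0 r1 where fe: "f = ((A0,A1,\<phi>),(B0,B1,\<psi>),r0,r1)" by (rule darr_cases)
  show "iar (U_Delta \<kappa>) (iar (U_Delta \<kappa>) f) = f"
    using f U_dinv2[of A0 A1 \<phi> \<kappa>] U_dinv2[of B0 B1 \<psi> \<kappa>] unfolding fe
    by (simp del: dinv_simp UD_ob_iff)
qed




lemma U_ginv: assumes f: "((A0,A1,\<phi>),(B0,B1,\<psi>),r0,r1) \<in> UD_arr \<kappa>"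
  shows "ginv (U_Delta \<kappa>) ((A0,A1,\<phi>),(B0,B1,\<psi>),r0,r1) =
     ((B0,B1,\<psi>),(A0,A1,\<phi>),restrict (inv_into A0 r0) B0, restrict (inv_into A1 r1) B1)"
proof -
  have bj: "bij_betw r0 A0 B0" "bij_betw r1 A1 B1" using f by simp_all
  show ?thesis
    apply (rule inv_uniq[OF U_groupoid])
    using f U_inv_ar[OF f] by (simp_all del: UD_ar_iff UD_ob_iff add: rid compose_inv_into_id[OF bj(1)] compose_inv_into_id[OF bj(2)])
qed

definition UYf :: "'u dobj \<Rightarrow> 'u dobj \<Rightarrow> 'u darr \<Rightarrow> 'u dobj" where
  "UYf x x' \<beta> = (case (x, x', \<beta>) of ((A0,A1,\<phi>),(B0,B1,\<psi>),(X,Y,r0,r1)) \<Rightarrow> (A0, B0, restrict (r0 \<circ> \<phi>) A0))"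
definition UCf :: "'u dobj \<Rightarrow> 'u dobj \<Rightarrow> 'u darr \<Rightarrow> 'u darr" where
  "UCf x x' \<beta> = (case (x, x', \<beta>) of ((A0,A1,\<phi>),(B0,B1,\<psi>),(X,Y,r0,r1)) \<Rightarrow>
     ((A0, B0, restrict (r0 \<circ> \<phi>) A0), (A0,A1,\<phi>), restrict id A0, restrict (inv_into A1 r0) B0))"

lemma UYf_simp[simp]: "UYf (A0,A1,\<phi>) (B0,B1,\<psi>) (X,Y,r0,r1) = (A0, B0, restrict (r0 \<circ> \<phi>) A0)"
  by (simp add: UYf_def)
lemma UCf_simp[simp]: "UCf (A0,A1,\<phi>) (B0,B1,\<psi>) (X,Y,r0,r1) =
     ((A0, B0, restrict (r0 \<circ> \<phi>) A0), (A0,A1,\<phi>), restrict id A0, restrict (inv_into A1 r0) B0)"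
  by (simp add: UCf_def)

context
  fixes \<kappa> :: "'k rel" and A0 A1 :: "'u set" and \<phi> and B0 B1 :: "'u set" and \<psi> and r0 r1 :: "'u \<Rightarrow> 'u"
  assumes x: "(A0,A1,\<phi>) \<in> UD_obj \<kappa>" and x': "(B0,B1,\<psi>) \<in> UD_obj \<kappa>"
    and b: "((A1,A0,restrict (inv_into A0 \<phi>) A1),(B0,B1,\<psi>),r0,r1) \<in> UD_arr \<kappa>"
begin

lemma bb: "bij_betw \<phi> A0 A1" "bij_betw \<psi> B0 B1" "bij_betw r0 A1 B0" "bij_betw r1 A0 B1"
  "\<phi> \<in> extensional A0" "\<psi> \<in> extensional B0" "r0 \<in> extensional A1" "r1 \<in> extensional A0"
  "|A0| <o \<kappa>" "|B0| <o \<kappa>" "|A1| <o \<kappa>" "|B1| <o \<kappa>"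
  using x x' b by auto
lemma bc: "\<And>y. y \<in> A1 \<Longrightarrow> \<psi> (r0 y) = r1 (inv_into A0 \<phi> y)" using b by auto

lemma U_XP1: "UYf (A0,A1,\<phi>) (B0,B1,\<psi>) ((A1,A0,restrict (inv_into A0 \<phi>) A1),(B0,B1,\<psi>),r0,r1) \<in> UD_obj \<kappa> \<and>
   UCf (A0,A1,\<phi>) (B0,B1,\<psi>) ((A1,A0,restrict (inv_into A0 \<phi>) A1),(B0,B1,\<psi>),r0,r1) \<in> UD_arr \<kappa>"
proof -
  have bj: "bij_betw (r0 \<circ> \<phi>) A0 B0" using bij_betw_trans bb by blast
  have "\<forall>a\<in>A0. \<phi> a = inv_into A1 r0 (r0 (\<phi> a))"
    using bb inv_into_f_f[OF bij_inj[OF bb(3)]] bij_betw_apply[OF bb(1)] by auto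
  moreover have "\<forall>a\<in>A0. r0 (\<phi> a) \<in> B0" using bj bij_betw_apply by fastforce
  ultimately show ?thesis using bj bb by (auto simp: rid bij_id' bij_betw_inv_into)
qed

lemma U_key: "\<forall>y\<in>B0. inv_into A0 r1 (\<psi> y) = inv_into A0 (restrict (r0 \<circ> \<phi>) A0) y"
proof
  fix y assume y: "y \<in> B0"
  have py: "\<psi> y \<in> B1" using bij_betw_apply[OF bb(2) y] .
  define a where "a = inv_into A0 r1 (\<psi> y)"
  have a: "a \<in> A0" "r1 a = \<psi> y" unfolding a_def using py bb(4)
    by (auto simp: bij_betw_def inv_into_into f_inv_into_f)
  have pa: "\<phi> a \<in> A1" using bij_betw_apply[OF bb(1) a(1)] .
  have "\<psi> (r0 (\<phi> a)) = r1 (inv_into A0 \<phi> (\<phi> a))" using bc[OF pa] .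
  also have "\<dots> = r1 a" using inv_into_f_f[OF bij_inj[OF bb(1)] a(1)] by simp
  finally have "\<psi> (r0 (\<phi> a)) = \<psi> y" using a by simp
  then have "r0 (\<phi> a) = y" using bij_inj[OF bb(2)] bij_betw_apply[OF bb(3) pa] y by (auto dest: inj_onD)
  then show "inv_into A0 r1 (\<psi> y) = inv_into A0 (restrict (r0 \<circ> \<phi>) A0) y"
    unfolding a_def[symmetric]
    using a(1) bij_inj[OF bij_betw_trans[OF bb(1) bb(3)]]
    by (intro inv_into_f_eq[symmetric]) (auto simp: inj_on_def)
qed

lemma U_e1: "restrict (restrict (inv_into A0 r1) B1 \<circ> \<psi>) B0 = restrict (inv_into A0 (restrict (r0 \<circ> \<phi>) A0)) B0"
  by (rule restrict_ext) (use U_key bij_betw_apply[OF bb(2)] in auto)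

lemma U_e2: "restrict (inv_into B1 (restrict (inv_into A0 r1) B1)) A0 = compose A0 r1 (restrict id A0)"
  unfolding rid compose_Id' extensional_restrict[OF bb(8)]
proof (rule extensionalityI[OF _ bb(8)])
  show "restrict (inv_into B1 (restrict (inv_into A0 r1) B1)) A0 \<in> extensional A0" by simp
  fix a assume a: "a \<in> A0"
  have inj: "inj_on (restrict (inv_into A0 r1) B1) B1" using bij_inj[OF bij_betw_inv_into[OF bb(4)]] by simp
  have "inv_into B1 (restrict (inv_into A0 r1) B1) a = r1 a"
    using bij_betw_apply[OF bb(4) a] inv_into_f_f[OF bij_inj[OF bb(4)] a]
    by (intro inv_into_f_eq[OF inj]) auto
  then show "restrict (inv_into B1 (restrict (inv_into A0 r1) B1)) A0 a = r1 a" using a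
    by (metis restrict_apply')
qed

lemma U_e3: "compose B0 r0 (restrict (inv_into A1 r0) B0) = restrict id B0"
  using compose_id_inv_into[of r0 A1 B0] bb(3) by (simp add: rid bij_betw_def)

lemma U_XP2: "UYf (B0,B1,\<psi>) (A0,A1,\<phi>) (ginv (U_Delta \<kappa>) (iar (U_Delta \<kappa>) ((A1,A0,restrict (inv_into A0 \<phi>) A1),(B0,B1,\<psi>),r0,r1)))
     = iob (U_Delta \<kappa>) (UYf (A0,A1,\<phi>) (B0,B1,\<psi>) ((A1,A0,restrict (inv_into A0 \<phi>) A1),(B0,B1,\<psi>),r0,r1)) \<and>
   UCf (B0,B1,\<psi>) (A0,A1,\<phi>) (ginv (U_Delta \<kappa>) (iar (U_Delta \<kappa>) ((A1,A0,restrict (inv_into A0 \<phi>) A1),(B0,B1,\<psi>),r0,r1)))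
     = cmp (U_Delta \<kappa>) ((A1,A0,restrict (inv_into A0 \<phi>) A1),(B0,B1,\<psi>),r0,r1)
        (iar (U_Delta \<kappa>) (UCf (A0,A1,\<phi>) (B0,B1,\<psi>) ((A1,A0,restrict (inv_into A0 \<phi>) A1),(B0,B1,\<psi>),r0,r1)))"
proof -
  have d2: "dinv (A1,A0,restrict (inv_into A0 \<phi>) A1) = (A0,A1,\<phi>)" using U_dinv2[OF x] by simp
  have ia: "iar (U_Delta \<kappa>) ((A1,A0,restrict (inv_into A0 \<phi>) A1),(B0,B1,\<psi>),r0,r1) =
     ((A0,A1,\<phi>),(B1,B0,restrict (inv_into B0 \<psi>) B1),r1,r0)"
    using d2 by (simp del: dinv_simp) simp
  have iab: "((A0,A1,\<phi>),(B1,B0,restrict (inv_into B0 \<psi>) B1),r1,r0) \<in> UD_arr \<kappa>"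
    using U_iar_ar[OF b] d2 by (simp del: dinv_simp UD_ar_iff) (simp del: UD_ar_iff)
  have gi: "ginv (U_Delta \<kappa>) (iar (U_Delta \<kappa>) ((A1,A0,restrict (inv_into A0 \<phi>) A1),(B0,B1,\<psi>),r0,r1)) =
     ((B1,B0,restrict (inv_into B0 \<psi>) B1),(A0,A1,\<phi>),restrict (inv_into A0 r1) B1, restrict (inv_into A1 r0) B0)"
    unfolding ia using U_ginv[OF iab] .
  show ?thesis unfolding gi using U_e1 U_e2 U_e3 by (simp add: rid)
qed

end

lemma U_XP3: assumes x: "(A0,A1,\<phi>) \<in> UD_obj \<kappa>"
  shows "UYf (A0,A1,\<phi>) (iob (U_Delta \<kappa>) (A0,A1,\<phi>)) (idn (U_Delta \<kappa>) (iob (U_Delta \<kappa>) (A0,A1,\<phi>))) = (A0,A1,\<phi>) \<and>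
    UCf (A0,A1,\<phi>) (iob (U_Delta \<kappa>) (A0,A1,\<phi>)) (idn (U_Delta \<kappa>) (iob (U_Delta \<kappa>) (A0,A1,\<phi>))) = idn (U_Delta \<kappa>) (A0,A1,\<phi>)"
proof -
  have bb: "bij_betw \<phi> A0 A1" "\<phi> \<in> extensional A0" using x by auto
  have e1: "restrict (restrict id A1 \<circ> \<phi>) A0 = \<phi>"
    by (rule extensionalityI[OF _ bb(2)]) (use bij_betw_apply[OF bb(1)] in auto)
  have e2: "restrict (inv_into A1 (restrict id A1)) A1 = restrict id A1"
    by (rule restrict_ext) (auto intro!: inv_into_f_eq simp: inj_on_def)
  show ?thesis using e1 e2 by simp
qed

theorem U_lifts: "lifts_against (U_Delta \<kappa> :: ('u dobj, 'u darr) igpd) A B io ia"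
proof (rule generic_lifts[where Yf = UYf and Cf = UCf])
  show "igroupoid (U_Delta \<kappa>)" by (rule U_igroupoid)
next
  fix x x' :: "'u dobj" and \<beta>
  assume x: "x \<in> Ob (U_Delta \<kappa>)" and x': "x' \<in> Ob (U_Delta \<kappa>)" and b: "\<beta> \<in> hom (U_Delta \<kappa>) (iob (U_Delta \<kappa>) x) x'"
  obtain A0 A1 \<phi> where xe: "x = (A0,A1,\<phi>)" by (rule dobj_cases)
  obtain B0 B1 \<psi> where xe': "x' = (B0,B1,\<psi>)" by (rule dobj_cases)
  obtain C0 C1 \<omega> D0 D1 \<chi> r0 r1 where be: "\<beta> = ((C0,C1,\<omega>),(D0,D1,\<chi>),r0,r1)" by (rule darr_cases)
  have e: "C0 = A1" "C1 = A0" "\<omega> = restrict (inv_into A0 \<phi>) A1" "D0 = B0" "D1 = B1" "\<chi> = \<psi>"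
    using b unfolding xe xe' be hom_def by auto
  have bA: "((A1,A0,restrict (inv_into A0 \<phi>) A1),(B0,B1,\<psi>),r0,r1) \<in> UD_arr \<kappa>"
    using b unfolding xe xe' be e hom_def by simp
  have xo: "(A0,A1,\<phi>) \<in> UD_obj \<kappa>" "(B0,B1,\<psi>) \<in> UD_obj \<kappa>" using x x' xe xe' by simp_all
  show "UYf x x' \<beta> \<in> Ob (U_Delta \<kappa>) \<and> UCf x x' \<beta> \<in> hom (U_Delta \<kappa>) (UYf x x' \<beta>) x"
    using U_XP1[OF xo bA] unfolding xe xe' be e hom_def by (simp del: UD_ar_iff UD_ob_iff UYf_simp UCf_simp) simp
  show "UYf x' x (ginv (U_Delta \<kappa>) (iar (U_Delta \<kappa>) \<beta>)) = iob (U_Delta \<kappa>) (UYf x x' \<beta>) \<and>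
        UCf x' x (ginv (U_Delta \<kappa>) (iar (U_Delta \<kappa>) \<beta>)) = cmp (U_Delta \<kappa>) \<beta> (iar (U_Delta \<kappa>) (UCf x x' \<beta>))"
    using U_XP2[OF xo bA] unfolding xe xe' be e .
next
  fix x :: "'u dobj" assume x: "x \<in> Ob (U_Delta \<kappa>)"
  obtain A0 A1 \<phi> where xe: "x = (A0,A1,\<phi>)" by (rule dobj_cases)
  show "UYf x (iob (U_Delta \<kappa>) x) (idn (U_Delta \<kappa>) (iob (U_Delta \<kappa>) x)) = x \<and>
        UCf x (iob (U_Delta \<kappa>) x) (idn (U_Delta \<kappa>) (iob (U_Delta \<kappa>) x)) = idn (U_Delta \<kappa>) x"
    using U_XP3[of A0 A1 \<phi> \<kappa>] x unfolding xe by (simp del: UD_ob_iff UYf_simp UCf_simp dinv_simp)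
qed




lemma parr_cases:
  fixes f :: "'u parr"
  obtains A0 A1 a \<phi> B0 B1 b \<psi> r0 r1 where "f = ((A0,A1,a,\<phi>),(B0,B1,b,\<psi>),r0,r1)"
  using that[of "fst (fst f)" "fst (snd (fst f))" "fst (snd (snd (fst f)))" "snd (snd (snd (fst f)))"
      "fst (fst (snd f))" "fst (snd (fst (snd f)))" "fst (snd (snd (fst (snd f))))" "snd (snd (snd (fst (snd f))))"
      "fst (snd (snd f))" "snd (snd (snd f))"] by simp
lemma pobj_cases:
  fixes X :: "'u pobj"
  obtains A0 A1 a \<phi> where "X = (A0,A1,a,\<phi>)"
  using that[of "fst X" "fst (snd X)" "fst (snd (snd X))" "snd (snd (snd X))"] by simp

lemma Ut_ob_iff[simp]: "(A0,A1,a,\<phi>) \<in> UtD_obj \<kappa> \<longleftrightarrow> (A0,A1,\<phi>) \<in> UD_obj \<kappa> \<and> a \<in> A0"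
  by (simp add: UtD_obj_def del: UD_ob_iff)
lemma Ut_ar_iff[simp]: "((A0,A1,a,\<phi>),(B0,B1,b,\<psi>),r0,r1) \<in> UtD_arr \<kappa> \<longleftrightarrow>
   (A0,A1,a,\<phi>) \<in> UtD_obj \<kappa> \<and> (B0,B1,b,\<psi>) \<in> UtD_obj \<kappa> \<and> ((A0,A1,\<phi>),(B0,B1,\<psi>),r0,r1) \<in> UD_arr \<kappa> \<and> r0 a = b"
  by (simp add: UtD_arr_def del: UD_ob_iff UD_ar_iff Ut_ob_iff)
lemma pinv_simp[simp]: "pinv (A0,A1,a,\<phi>) = (A1,A0,\<phi> a,restrict (inv_into A0 \<phi>) A1)"
  by (simp add: pinv_def)

lemma Ut_simps[simp]:
  "Ob (Ut_Delta \<kappa>) = UtD_obj \<kappa>" "Ar (Ut_Delta \<kappa>) = UtD_arr \<kappa>"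
  "gdom (Ut_Delta \<kappa>) (X,Y,r0,r1) = X" "gcod (Ut_Delta \<kappa>) (X,Y,r0,r1) = Y"
  "idn (Ut_Delta \<kappa>) (A0,A1,a,\<phi>) = ((A0,A1,a,\<phi>),(A0,A1,a,\<phi>),restrict id A0, restrict id A1)"
  "cmp (Ut_Delta \<kappa>) (Y,Z,s0,s1) ((A0,A1,a,\<phi>),Y',r0,r1) = ((A0,A1,a,\<phi>),Z,compose A0 s0 r0, compose A1 s1 r1)"
  "iob (Ut_Delta \<kappa>) = pinv" "iar (Ut_Delta \<kappa>) (X,Y,r0,r1) = (pinv X, pinv Y, r1, r0)"
  by (simp_all add: Ut_Delta_def)

lemma Ut_idn_ar: "(A0,A1,a,\<phi>) \<in> UtD_obj \<kappa> \<Longrightarrow> ((A0,A1,a,\<phi>),(A0,A1,a,\<phi>),restrict id A0, restrict id A1) \<in> UtD_arr \<kappa>"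
  using U_idn_ar[of A0 A1 \<phi> \<kappa>] by (simp del: UD_ob_iff UD_ar_iff)

lemma Ut_cmp_ar: assumes "((A0,A1,a,\<phi>),(B0,B1,b,\<psi>),r0,r1) \<in> UtD_arr \<kappa>" "((B0,B1,b,\<psi>),(C0,C1,c,\<chi>),s0,s1) \<in> UtD_arr \<kappa>"
  shows "((A0,A1,a,\<phi>),(C0,C1,c,\<chi>),compose A0 s0 r0, compose A1 s1 r1) \<in> UtD_arr \<kappa>"
  using assms U_cmp_ar[of A0 A1 \<phi> B0 B1 \<psi> r0 r1 \<kappa> C0 C1 \<chi> s0 s1] by (simp del: UD_ob_iff UD_ar_iff add: compose_eq)

lemma Ut_inv_ar: assumes f: "((A0,A1,a,\<phi>),(B0,B1,b,\<psi>),r0,r1) \<in> UtD_arr \<kappa>"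
  shows "((B0,B1,b,\<psi>),(A0,A1,a,\<phi>),restrict (inv_into A0 r0) B0, restrict (inv_into A1 r1) B1) \<in> UtD_arr \<kappa>"
proof -
  have u: "((A0,A1,\<phi>),(B0,B1,\<psi>),r0,r1) \<in> UD_arr \<kappa>" and p: "a \<in> A0" "b \<in> B0" "r0 a = b" using f by simp_all
  have bj: "bij_betw r0 A0 B0" using u by simp
  have "restrict (inv_into A0 r0) B0 b = a" using p inv_into_f_f[OF bij_inj[OF bj] p(1)] by auto
  then show ?thesis using f U_inv_ar[OF u] by (simp del: UD_ob_iff UD_ar_iff)
qed

lemma Ut_pinv_ob: "(A0,A1,a,\<phi>) \<in> UtD_obj \<kappa> \<Longrightarrow> pinv (A0,A1,a,\<phi>) \<in> UtD_obj \<kappa>"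
  using U_dinv_ob[of A0 A1 \<phi> \<kappa>] by (auto simp del: UD_ob_iff dinv_simp simp: bij_betw_apply) (auto simp: bij_betw_apply)

lemma Ut_pinv2: assumes x: "(A0,A1,a,\<phi>) \<in> UtD_obj \<kappa>" shows "pinv (pinv (A0,A1,a,\<phi>)) = (A0,A1,a,\<phi>)"
proof -
  have u: "(A0,A1,\<phi>) \<in> UD_obj \<kappa>" "a \<in> A0" using x by simp_all
  have bj: "bij_betw \<phi> A0 A1" using u by simp
  have "restrict (inv_into A0 \<phi>) A1 (\<phi> a) = a" using u(2) inv_into_f_f[OF bij_inj[OF bj] u(2)] bij_betw_apply[OF bj u(2)] by simp
  then show ?thesis using U_dinv2[OF u(1)] by simp
qed

lemma Ut_iar_ar: assumes f: "((A0,A1,a,\<phi>),(B0,B1,b,\<psi>),r0,r1) \<in> UtD_arr \<kappa>"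
  shows "(pinv (A0,A1,a,\<phi>), pinv (B0,B1,b,\<psi>), r1, r0) \<in> UtD_arr \<kappa>"
proof -
  have u: "((A0,A1,\<phi>),(B0,B1,\<psi>),r0,r1) \<in> UD_arr \<kappa>" and p: "a \<in> A0" "b \<in> B0" "r0 a = b" using f by simp_all
  have r: "r1 (\<phi> a) = \<psi> b" using u p by auto
  have o: "(A0,A1,a,\<phi>) \<in> UtD_obj \<kappa>" "(B0,B1,b,\<psi>) \<in> UtD_obj \<kappa>"
    using f by (simp_all del: Ut_ob_iff UD_ar_iff)
  note r Ut_pinv_ob[OF o(1)] Ut_pinv_ob[OF o(2)]
  then show ?thesis using U_iar_ar[OF u] by (simp del: UD_ob_iff UD_ar_iff Ut_ob_iff)
qed

lemma Ut_groupoid: "groupoid (Ut_Delta \<kappa>)"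
  unfolding groupoid_def
proof (intro conjI ballI impI)
  fix f assume f: "f \<in> Ar (Ut_Delta \<kappa>)"
  obtain A0 A1 a \<phi> B0 B1 b \<psi> r0 r1 where fe: "f = ((A0,A1,a,\<phi>),(B0,B1,b,\<psi>),r0,r1)" by (rule parr_cases)
  show "gdom (Ut_Delta \<kappa>) f \<in> Ob (Ut_Delta \<kappa>)" "gcod (Ut_Delta \<kappa>) f \<in> Ob (Ut_Delta \<kappa>)"
    using f unfolding fe by (simp_all del: Ut_ob_iff)
  show "cmp (Ut_Delta \<kappa>) (idn (Ut_Delta \<kappa>) (gcod (Ut_Delta \<kappa>) f)) f = f"
    using f unfolding fe by (simp add: rid Id_compose bij_betw_imp_funcset)
  show "cmp (Ut_Delta \<kappa>) f (idn (Ut_Delta \<kappa>) (gdom (Ut_Delta \<kappa>) f)) = f"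
    using f unfolding fe by (simp add: rid compose_Id' extensional_restrict)
  let ?g = "((B0,B1,b,\<psi>),(A0,A1,a,\<phi>),restrict (inv_into A0 r0) B0, restrict (inv_into A1 r1) B1)"
  have g: "?g \<in> UtD_arr \<kappa>" using Ut_inv_ar[of A0 A1 a \<phi> B0 B1 b \<psi> r0 r1 \<kappa>] f fe by (simp del: Ut_ar_iff)
  have "cmp (Ut_Delta \<kappa>) ?g f = idn (Ut_Delta \<kappa>) (gdom (Ut_Delta \<kappa>) f)"
    using f unfolding fe by (simp add: rid compose_inv_into_id)
  moreover have "cmp (Ut_Delta \<kappa>) f ?g = idn (Ut_Delta \<kappa>) (gcod (Ut_Delta \<kappa>) f)"
    using f unfolding fe by (simp add: rid compose_id_inv_into bij_betw_def)
  ultimately show "\<exists>g\<in>Ar (Ut_Delta \<kappa>). gdom (Ut_Delta \<kappa>) g = gcod (Ut_Delta \<kappa>) f \<and> gcod (Ut_Delta \<kappa>) g = gdom (Ut_Delta \<kappa>) f \<and>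
          cmp (Ut_Delta \<kappa>) g f = idn (Ut_Delta \<kappa>) (gdom (Ut_Delta \<kappa>) f) \<and> cmp (Ut_Delta \<kappa>) f g = idn (Ut_Delta \<kappa>) (gcod (Ut_Delta \<kappa>) f)"
    using g by (intro bexI[of _ ?g] conjI) (simp_all add: fe del: Ut_ar_iff)
next
  fix x assume x: "x \<in> Ob (Ut_Delta \<kappa>)"
  obtain A0 A1 a \<phi> where xe: "x = (A0,A1,a,\<phi>)" by (rule pobj_cases)
  show "idn (Ut_Delta \<kappa>) x \<in> Ar (Ut_Delta \<kappa>)" using Ut_idn_ar[of A0 A1 a \<phi> \<kappa>] x xe by (simp del: Ut_ar_iff Ut_ob_iff)
  show "gdom (Ut_Delta \<kappa>) (idn (Ut_Delta \<kappa>) x) = x" "gcod (Ut_Delta \<kappa>) (idn (Ut_Delta \<kappa>) x) = x" using xe by simp_all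
next
  fix f g assume f: "f \<in> Ar (Ut_Delta \<kappa>)" and g: "g \<in> Ar (Ut_Delta \<kappa>)" and c: "gcod (Ut_Delta \<kappa>) f = gdom (Ut_Delta \<kappa>) g"
  obtain A0 A1 a \<phi> B0 B1 b \<psi> r0 r1 where fe: "f = ((A0,A1,a,\<phi>),(B0,B1,b,\<psi>),r0,r1)" by (rule parr_cases)
  obtain B0' B1' b' \<psi>' C0 C1 c' \<chi> s0 s1 where ge: "g = ((B0',B1',b',\<psi>'),(C0,C1,c',\<chi>),s0,s1)" by (rule parr_cases)
  have e: "B0' = B0" "B1' = B1" "\<psi>' = \<psi>" "b' = b" using c fe ge by auto
  show "cmp (Ut_Delta \<kappa>) g f \<in> Ar (Ut_Delta \<kappa>)"
    using Ut_cmp_ar[of A0 A1 a \<phi> B0 B1 b \<psi> r0 r1 \<kappa> C0 C1 c' \<chi> s0 s1] f g unfolding fe ge e by (simp del: Ut_ar_iff)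
  show "gdom (Ut_Delta \<kappa>) (cmp (Ut_Delta \<kappa>) g f) = gdom (Ut_Delta \<kappa>) f" "gcod (Ut_Delta \<kappa>) (cmp (Ut_Delta \<kappa>) g f) = gcod (Ut_Delta \<kappa>) g"
    unfolding fe ge by simp_all
next
  fix f g h assume f: "f \<in> Ar (Ut_Delta \<kappa>)" and g: "g \<in> Ar (Ut_Delta \<kappa>)" and h: "h \<in> Ar (Ut_Delta \<kappa>)"
    and c1: "gcod (Ut_Delta \<kappa>) f = gdom (Ut_Delta \<kappa>) g" and c2: "gcod (Ut_Delta \<kappa>) g = gdom (Ut_Delta \<kappa>) h"
  obtain A0 A1 a \<phi> B0 B1 b \<psi> r0 r1 where fe: "f = ((A0,A1,a,\<phi>),(B0,B1,b,\<psi>),r0,r1)" by (rule parr_cases)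
  obtain B0' B1' b' \<psi>' C0 C1 c' \<chi> s0 s1 where ge: "g = ((B0',B1',b',\<psi>'),(C0,C1,c',\<chi>),s0,s1)" by (rule parr_cases)
  obtain C0' C1' c'' \<chi>' D0 D1 d \<omega> t0 t1 where he: "h = ((C0',C1',c'',\<chi>'),(D0,D1,d,\<omega>),t0,t1)" by (rule parr_cases)
  have e: "B0' = B0" "B1' = B1" "\<psi>' = \<psi>" "C0' = C0" "C1' = C1" "\<chi>' = \<chi>" "b' = b" "c'' = c'"
    using c1 c2 fe ge he by auto
  show "cmp (Ut_Delta \<kappa>) h (cmp (Ut_Delta \<kappa>) g f) = cmp (Ut_Delta \<kappa>) (cmp (Ut_Delta \<kappa>) h g) f"
    using f unfolding fe ge he e by (simp add: compose_assoc bij_betw_imp_funcset)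
qed

lemma Ut_igroupoid: "igroupoid (Ut_Delta \<kappa>)"
  unfolding igroupoid_def
proof (intro conjI ballI)
  show "groupoid (Ut_Delta \<kappa>)" by (rule Ut_groupoid)
  show "functor_betw (Ut_Delta \<kappa>) (Ut_Delta \<kappa>) (iob (Ut_Delta \<kappa>)) (iar (Ut_Delta \<kappa>))"
    unfolding functor_betw_def
  proof (intro conjI ballI impI)
    show "iob (Ut_Delta \<kappa>) \<in> Ob (Ut_Delta \<kappa>) \<rightarrow> Ob (Ut_Delta \<kappa>)"
      using Ut_pinv_ob by (auto simp del: Ut_ob_iff pinv_simp elim!: pobj_cases)
    show "iar (Ut_Delta \<kappa>) \<in> Ar (Ut_Delta \<kappa>) \<rightarrow> Ar (Ut_Delta \<kappa>)"
    proof
      fix f assume f: "f \<in> Ar (Ut_Delta \<kappa>)"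
      obtain A0 A1 a \<phi> B0 B1 b \<psi> r0 r1 where fe: "f = ((A0,A1,a,\<phi>),(B0,B1,b,\<psi>),r0,r1)" by (rule parr_cases)
      show "iar (Ut_Delta \<kappa>) f \<in> Ar (Ut_Delta \<kappa>)" using Ut_iar_ar[of A0 A1 a \<phi> B0 B1 b \<psi> r0 r1 \<kappa>] f unfolding fe
        by (simp del: Ut_ar_iff pinv_simp)
    qed
  next
    fix f assume f: "f \<in> Ar (Ut_Delta \<kappa>)"
    obtain A0 A1 a \<phi> B0 B1 b \<psi> r0 r1 where fe: "f = ((A0,A1,a,\<phi>),(B0,B1,b,\<psi>),r0,r1)" by (rule parr_cases)
    show "gdom (Ut_Delta \<kappa>) (iar (Ut_Delta \<kappa>) f) = iob (Ut_Delta \<kappa>) (gdom (Ut_Delta \<kappa>) f)"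
         "gcod (Ut_Delta \<kappa>) (iar (Ut_Delta \<kappa>) f) = iob (Ut_Delta \<kappa>) (gcod (Ut_Delta \<kappa>) f)"
      unfolding fe by (simp_all del: pinv_simp)
  next
    fix x assume x: "x \<in> Ob (Ut_Delta \<kappa>)"
    obtain A0 A1 a \<phi> where xe: "x = (A0,A1,a,\<phi>)" by (rule pobj_cases)
    have "restrict id A0 a = a" using x xe by simp
    then show "iar (Ut_Delta \<kappa>) (idn (Ut_Delta \<kappa>) x) = idn (Ut_Delta \<kappa>) (iob (Ut_Delta \<kappa>) x)" unfolding xe by simp
  next
    fix f g assume f: "f \<in> Ar (Ut_Delta \<kappa>)" and g: "g \<in> Ar (Ut_Delta \<kappa>)" and c: "gcod (Ut_Delta \<kappa>) f = gdom (Ut_Delta \<kappa>) g"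
    obtain A0 A1 a \<phi> B0 B1 b \<psi> r0 r1 where fe: "f = ((A0,A1,a,\<phi>),(B0,B1,b,\<psi>),r0,r1)" by (rule parr_cases)
    obtain B0' B1' b' \<psi>' C0 C1 c' \<chi> s0 s1 where ge: "g = ((B0',B1',b',\<psi>'),(C0,C1,c',\<chi>),s0,s1)" by (rule parr_cases)
    have e: "B0' = B0" "B1' = B1" "\<psi>' = \<psi>" "b' = b" using c fe ge by auto
    have p: "a \<in> A0" using f fe by simp
    have "bij_betw \<phi> A0 A1" using f fe by simp
    then have "\<phi> a \<in> A1" using p bij_betw_apply by fast
    then show "iar (Ut_Delta \<kappa>) (cmp (Ut_Delta \<kappa>) g f) = cmp (Ut_Delta \<kappa>) (iar (Ut_Delta \<kappa>) g) (iar (Ut_Delta \<kappa>) f)"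
      unfolding fe ge e by simp
  qed
next
  fix x assume x: "x \<in> Ob (Ut_Delta \<kappa>)"
  obtain A0 A1 a \<phi> where xe: "x = (A0,A1,a,\<phi>)" by (rule pobj_cases)
  show "iob (Ut_Delta \<kappa>) (iob (Ut_Delta \<kappa>) x) = x" using Ut_pinv2[of A0 A1 a \<phi> \<kappa>] x unfolding xe
    by (simp del: pinv_simp Ut_ob_iff)
next
  fix f assume f: "f \<in> Ar (Ut_Delta \<kappa>)"
  obtain A0 A1 a \<phi> B0 B1 b \<psi> r0 r1 where fe: "f = ((A0,A1,a,\<phi>),(B0,B1,b,\<psi>),r0,r1)" by (rule parr_cases)
  show "iar (Ut_Delta \<kappa>) (iar (Ut_Delta \<kappa>) f) = f"
    using f Ut_pinv2[of A0 A1 a \<phi> \<kappa>] Ut_pinv2[of B0 B1 b \<psi> \<kappa>] unfolding fe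
    by (simp del: pinv_simp Ut_ob_iff)
qed




lemma Ut_ginv: assumes f: "((A0,A1,a,\<phi>),(B0,B1,b,\<psi>),r0,r1) \<in> UtD_arr \<kappa>"
  shows "ginv (Ut_Delta \<kappa>) ((A0,A1,a,\<phi>),(B0,B1,b,\<psi>),r0,r1) =
     ((B0,B1,b,\<psi>),(A0,A1,a,\<phi>),restrict (inv_into A0 r0) B0, restrict (inv_into A1 r1) B1)"
proof -
  have bj: "bij_betw r0 A0 B0" "bij_betw r1 A1 B1" using f by simp_all
  show ?thesis
    apply (rule inv_uniq[OF Ut_groupoid])
    using f Ut_inv_ar[OF f] by (simp_all del: Ut_ar_iff Ut_ob_iff add: rid compose_inv_into_id[OF bj(1)] compose_inv_into_id[OF bj(2)])
qed

definition UtYf :: "'u pobj \<Rightarrow> 'u pobj \<Rightarrow> 'u parr \<Rightarrow> 'u pobj" where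
  "UtYf x x' \<beta> = (case (x, x', \<beta>) of ((A0,A1,a,\<phi>),(B0,B1,b,\<psi>),(X,Y,r0,r1)) \<Rightarrow> (A0, B0, a, restrict (r0 \<circ> \<phi>) A0))"
definition UtCf :: "'u pobj \<Rightarrow> 'u pobj \<Rightarrow> 'u parr \<Rightarrow> 'u parr" where
  "UtCf x x' \<beta> = (case (x, x', \<beta>) of ((A0,A1,a,\<phi>),(B0,B1,b,\<psi>),(X,Y,r0,r1)) \<Rightarrow>
     ((A0, B0, a, restrict (r0 \<circ> \<phi>) A0), (A0,A1,a,\<phi>), restrict id A0, restrict (inv_into A1 r0) B0))"

lemma UtYf_simp[simp]: "UtYf (A0,A1,a,\<phi>) (B0,B1,b,\<psi>) (X,Y,r0,r1) = (A0, B0, a, restrict (r0 \<circ> \<phi>) A0)"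
  by (simp add: UtYf_def)
lemma UtCf_simp[simp]: "UtCf (A0,A1,a,\<phi>) (B0,B1,b,\<psi>) (X,Y,r0,r1) =
     ((A0, B0, a, restrict (r0 \<circ> \<phi>) A0), (A0,A1,a,\<phi>), restrict id A0, restrict (inv_into A1 r0) B0)"
  by (simp add: UtCf_def)

context
  fixes \<kappa> :: "'k rel" and A0 A1 :: "'u set" and a \<phi> and B0 B1 :: "'u set" and b \<psi> and r0 r1 :: "'u \<Rightarrow> 'u"
  assumes x: "(A0,A1,a,\<phi>) \<in> UtD_obj \<kappa>" and x': "(B0,B1,b,\<psi>) \<in> UtD_obj \<kappa>"
    and bt: "((A1,A0,\<phi> a,restrict (inv_into A0 \<phi>) A1),(B0,B1,b,\<psi>),r0,r1) \<in> UtD_arr \<kappa>"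
begin

lemma xU: "(A0,A1,\<phi>) \<in> UD_obj \<kappa>" using x by (simp del: UD_ob_iff)
lemma x'U: "(B0,B1,\<psi>) \<in> UD_obj \<kappa>" using x' by (simp del: UD_ob_iff)
lemma bU: "((A1,A0,restrict (inv_into A0 \<phi>) A1),(B0,B1,\<psi>),r0,r1) \<in> UD_arr \<kappa>" using bt by (simp del: UD_ob_iff UD_ar_iff)
lemma pts: "a \<in> A0" "r0 (\<phi> a) = b" "b \<in> B0" using x x' bt by simp_all

lemma Ut_XP1: "UtYf (A0,A1,a,\<phi>) (B0,B1,b,\<psi>) ((A1,A0,\<phi> a,restrict (inv_into A0 \<phi>) A1),(B0,B1,b,\<psi>),r0,r1) \<in> UtD_obj \<kappa> \<and>
   UtCf (A0,A1,a,\<phi>) (B0,B1,b,\<psi>) ((A1,A0,\<phi> a,restrict (inv_into A0 \<phi>) A1),(B0,B1,b,\<psi>),r0,r1) \<in> UtD_arr \<kappa>"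
  using U_XP1[OF xU x'U bU] pts x by (simp del: UD_ob_iff UD_ar_iff)

lemma Ut_XP2: "UtYf (B0,B1,b,\<psi>) (A0,A1,a,\<phi>) (ginv (Ut_Delta \<kappa>) (iar (Ut_Delta \<kappa>) ((A1,A0,\<phi> a,restrict (inv_into A0 \<phi>) A1),(B0,B1,b,\<psi>),r0,r1)))
     = iob (Ut_Delta \<kappa>) (UtYf (A0,A1,a,\<phi>) (B0,B1,b,\<psi>) ((A1,A0,\<phi> a,restrict (inv_into A0 \<phi>) A1),(B0,B1,b,\<psi>),r0,r1)) \<and>
   UtCf (B0,B1,b,\<psi>) (A0,A1,a,\<phi>) (ginv (Ut_Delta \<kappa>) (iar (Ut_Delta \<kappa>) ((A1,A0,\<phi> a,restrict (inv_into A0 \<phi>) A1),(B0,B1,b,\<psi>),r0,r1)))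
     = cmp (Ut_Delta \<kappa>) ((A1,A0,\<phi> a,restrict (inv_into A0 \<phi>) A1),(B0,B1,b,\<psi>),r0,r1)
        (iar (Ut_Delta \<kappa>) (UtCf (A0,A1,a,\<phi>) (B0,B1,b,\<psi>) ((A1,A0,\<phi> a,restrict (inv_into A0 \<phi>) A1),(B0,B1,b,\<psi>),r0,r1)))"
proof -
  have d2: "pinv (A1,A0,\<phi> a,restrict (inv_into A0 \<phi>) A1) = (A0,A1,a,\<phi>)" using Ut_pinv2[OF x] by simp
  have ia: "iar (Ut_Delta \<kappa>) ((A1,A0,\<phi> a,restrict (inv_into A0 \<phi>) A1),(B0,B1,b,\<psi>),r0,r1) =
     ((A0,A1,a,\<phi>),(B1,B0,\<psi> b,restrict (inv_into B0 \<psi>) B1),r1,r0)"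
    using d2 by (simp del: pinv_simp) simp
  have iab: "((A0,A1,a,\<phi>),(B1,B0,\<psi> b,restrict (inv_into B0 \<psi>) B1),r1,r0) \<in> UtD_arr \<kappa>"
    using Ut_iar_ar[OF bt] d2 by (simp del: pinv_simp Ut_ar_iff) (simp del: Ut_ar_iff)
  have gi: "ginv (Ut_Delta \<kappa>) (iar (Ut_Delta \<kappa>) ((A1,A0,\<phi> a,restrict (inv_into A0 \<phi>) A1),(B0,B1,b,\<psi>),r0,r1)) =
     ((B1,B0,\<psi> b,restrict (inv_into B0 \<psi>) B1),(A0,A1,a,\<phi>),restrict (inv_into A0 r1) B1, restrict (inv_into A1 r0) B0)"
    unfolding ia using Ut_ginv[OF iab] .
  have pt: "restrict (r0 \<circ> \<phi>) A0 a = b" using pts by simp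
  show ?thesis unfolding gi using U_e1[OF xU x'U bU] U_e2[OF xU x'U bU] U_e3[OF xU x'U bU] pt
    by (simp add: rid del: UD_ob_iff UD_ar_iff)
qed

end

lemma Ut_XP3: assumes x: "(A0,A1,a,\<phi>) \<in> UtD_obj \<kappa>"
  shows "UtYf (A0,A1,a,\<phi>) (iob (Ut_Delta \<kappa>) (A0,A1,a,\<phi>)) (idn (Ut_Delta \<kappa>) (iob (Ut_Delta \<kappa>) (A0,A1,a,\<phi>))) = (A0,A1,a,\<phi>) \<and>
    UtCf (A0,A1,a,\<phi>) (iob (Ut_Delta \<kappa>) (A0,A1,a,\<phi>)) (idn (Ut_Delta \<kappa>) (iob (Ut_Delta \<kappa>) (A0,A1,a,\<phi>))) = idn (Ut_Delta \<kappa>) (A0,A1,a,\<phi>)"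
proof -
  have bb: "bij_betw \<phi> A0 A1" "\<phi> \<in> extensional A0" using x by auto
  have e1: "restrict (restrict id A1 \<circ> \<phi>) A0 = \<phi>"
    by (rule extensionalityI[OF _ bb(2)]) (use bij_betw_apply[OF bb(1)] in auto)
  have e2: "restrict (inv_into A1 (restrict id A1)) A1 = restrict id A1"
    by (rule restrict_ext) (auto intro!: inv_into_f_eq simp: inj_on_def)
  show ?thesis using e1 e2 by simp
qed

theorem Ut_lifts: "lifts_against (Ut_Delta \<kappa> :: ('u pobj, 'u parr) igpd) A B io ia"
proof (rule generic_lifts[where Yf = UtYf and Cf = UtCf])
  show "igroupoid (Ut_Delta \<kappa>)" by (rule Ut_igroupoid)
next
  fix x x' :: "'u pobj" and \<beta>
  assume x: "x \<in> Ob (Ut_Delta \<kappa>)" and x': "x' \<in> Ob (Ut_Delta \<kappa>)" and b: "\<beta> \<in> hom (Ut_Delta \<kappa>) (iob (Ut_Delta \<kappa>) x) x'"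
  obtain A0 A1 a \<phi> where xe: "x = (A0,A1,a,\<phi>)" by (rule pobj_cases)
  obtain B0 B1 b' \<psi> where xe': "x' = (B0,B1,b',\<psi>)" by (rule pobj_cases)
  obtain C0 C1 c \<omega> D0 D1 d \<chi> r0 r1 where be: "\<beta> = ((C0,C1,c,\<omega>),(D0,D1,d,\<chi>),r0,r1)" by (rule parr_cases)
  have e: "C0 = A1" "C1 = A0" "c = \<phi> a" "\<omega> = restrict (inv_into A0 \<phi>) A1" "D0 = B0" "D1 = B1" "d = b'" "\<chi> = \<psi>"
    using b unfolding xe xe' be hom_def by auto
  have bA: "((A1,A0,\<phi> a,restrict (inv_into A0 \<phi>) A1),(B0,B1,b',\<psi>),r0,r1) \<in> UtD_arr \<kappa>"
    using b unfolding xe xe' be e hom_def by (simp del: Ut_ar_iff)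
  have xo: "(A0,A1,a,\<phi>) \<in> UtD_obj \<kappa>" "(B0,B1,b',\<psi>) \<in> UtD_obj \<kappa>" using x x' xe xe' by (simp_all del: Ut_ob_iff)
  show "UtYf x x' \<beta> \<in> Ob (Ut_Delta \<kappa>) \<and> UtCf x x' \<beta> \<in> hom (Ut_Delta \<kappa>) (UtYf x x' \<beta>) x"
    using Ut_XP1[OF xo bA] unfolding xe xe' be e hom_def
    by (simp del: Ut_ar_iff Ut_ob_iff UtYf_simp UtCf_simp) simp
  show "UtYf x' x (ginv (Ut_Delta \<kappa>) (iar (Ut_Delta \<kappa>) \<beta>)) = iob (Ut_Delta \<kappa>) (UtYf x x' \<beta>) \<and>
        UtCf x' x (ginv (Ut_Delta \<kappa>) (iar (Ut_Delta \<kappa>) \<beta>)) = cmp (Ut_Delta \<kappa>) \<beta> (iar (Ut_Delta \<kappa>) (UtCf x x' \<beta>))"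
    using Ut_XP2[OF xo bA] unfolding xe xe' be e .
next
  fix x :: "'u pobj" assume x: "x \<in> Ob (Ut_Delta \<kappa>)"
  obtain A0 A1 a \<phi> where xe: "x = (A0,A1,a,\<phi>)" by (rule pobj_cases)
  show "UtYf x (iob (Ut_Delta \<kappa>) x) (idn (Ut_Delta \<kappa>) (iob (Ut_Delta \<kappa>) x)) = x \<and>
        UtCf x (iob (Ut_Delta \<kappa>) x) (idn (Ut_Delta \<kappa>) (iob (Ut_Delta \<kappa>) x)) = idn (Ut_Delta \<kappa>) x"
    using Ut_XP3[of A0 A1 a \<phi> \<kappa>] x unfolding xe by (simp del: Ut_ob_iff UtYf_simp UtCf_simp pinv_simp)
qed

theorem lemma5p15:
  fixes \<kappa> :: "'k rel"
  assumes "inaccessible \<kappa>"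
  shows "igroupoid (Ut_Delta \<kappa> :: ('u pobj, 'u parr) igpd) \<and>
         (\<forall>(A :: ('o1, 'a1) igpd) (B :: ('p1, 'b1) igpd) io ia.
            lifts_against (Ut_Delta \<kappa> :: ('u pobj, 'u parr) igpd) A B io ia) \<and>
         igroupoid (U_Delta \<kappa> :: ('u dobj, 'u darr) igpd) \<and>
         (\<forall>(A :: ('o2, 'a2) igpd) (B :: ('p2, 'b2) igpd) io ia.
            lifts_against (U_Delta \<kappa> :: ('u dobj, 'u darr) igpd) A B io ia)"
  using Ut_igroupoid U_igroupoid Ut_lifts U_lifts by blast


end
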